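(* Let $\Lambda_f$ be a uniformly random numerical semigroup with Frobenius number $f$, and $m(\Lambda_f)$ its multiplicity. Then for every integer $k$: \[\lim_{f\to\infty,\ f \text{ even}} \mathbb{P}[f - 2m(\Lambda_f) = 2k] = \begin{cases} C_0^{-1} 2^{k-1} & k < 0,\\ 0 & k = 0,\\ C_0^{-1} 2^{-3k-1} S(2k) & k > 0;\end{cases}\] \[\lim_{f\to\infty,\ f \text{ odd}} \mathbb{P}[f - 2m(\Lambda_f) = 2k+1] = \begin{cases} C_1^{-1} 2^{(2k-1)/2} & k < 0,\\ C_1^{-1} 2^{-(6k+5)/2} S(2k+1) & k \geq 0.\end{cases}\]
   Context: A numerical semigroup is a subset $\Lambda \subseteq \mathbb{N}_0$ containing $0$, closed under addition, with finite complement; its multiplicity is $\min(\Lambda\setminus\{0\})$, its conductor is the least $c$ with $c + \mathbb{N}_0 \subseteq \Lambda$, and its Frobenius number is the conductor minus $1$. $\operatorname{Fr}(f)$ denotes the number of numerical semigroups with Frobenius number $f$, and $C_0 = \lim_{f\ \text{even}} 2^{-f/2}\operatorname{Fr}(f)$, $C_1 = \lim_{f\ \text{odd}} 2^{-f/2}\operatorname{Fr}(f)$ (these limits exist and are positive constants, by Backelin). For $j \geq 1$, $S(j)$ is the number of numerical semigroups with multiplicity $j+1$ and Frobenius number $3j+2$. *)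

theory Defs
  imports Complex_Main
begin

definition numerical_semigroup :: "nat set \<Rightarrow> bool" where
  "numerical_semigroup L \<longleftrightarrow> 0 \<in> L \<and> (\<forall>x\<in>L. \<forall>y\<in>L. x + y \<in> L) \<and> finite (- L)"

definition multiplicity :: "nat set \<Rightarrow> nat" where
  "multiplicity L = (LEAST x. x \<in> L \<and> 0 < x)"

definition conductor :: "nat set \<Rightarrow> nat" where
  "conductor L = (LEAST c. \<forall>n\<ge>c. n \<in> L)"

text \<open>Frobenius number = conductor - 1 (as an integer; it is -1 for the trivial semigroup).\<close>
definition frobenius :: "nat set \<Rightarrow> int" where
  "frobenius L = int (conductor L) - 1"

definition Fr :: "nat \<Rightarrow> nat" where
  "Fr f = card {L. numerical_semigroup L \<and> frobenius L = int f}"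

definition C0 :: real where
  "C0 = lim (\<lambda>n. real (Fr (2 * n)) / 2 powr (real (2 * n) / 2))"

definition C1 :: real where
  "C1 = lim (\<lambda>n. real (Fr (2 * n + 1)) / 2 powr (real (2 * n + 1) / 2))"

definition S :: "nat \<Rightarrow> nat" where
  "S j = card {L. numerical_semigroup L \<and> multiplicity L = j + 1 \<and> frobenius L = int (3 * j + 2)}"

definition prob_diff :: "nat \<Rightarrow> int \<Rightarrow> real" where
  "prob_diff f d = real (card {L. numerical_semigroup L \<and> frobenius L = int f
       \<and> int f - 2 * int (multiplicity L) = d}) / real (Fr f)"

end

theory Submission
  imports Defs "HOL-Library.FuncSet" "HOL-Real_Asymp.Real_Asymp"
begin

definition Sg :: "nat \<Rightarrow> nat set set" where
  "Sg f = {L. 0 \<in> L \<and> (\<forall>x\<in>L. \<forall>y\<in>L. x + y \<in> L) \<and> f \<notin> L \<and> (\<forall>n>f. n \<in> L)}"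

definition Nm :: "nat \<Rightarrow> nat \<Rightarrow> nat" where
  "Nm f m = card {L \<in> Sg f. multiplicity L = m}"

lemma conductor_eq:
  assumes "f \<notin> L" "\<forall>n>f. n \<in> L"
  shows "conductor L = Suc f"
  unfolding conductor_def
proof (rule Least_equality)
  show "\<forall>n\<ge>Suc f. n \<in> L" using assms by auto
next
  fix c assume "\<forall>n\<ge>c. n \<in> L"
  then show "Suc f \<le> c" using assms(1) by (metis not_less_eq_eq)
qed

lemma ns_frob_iff:
  assumes "numerical_semigroup L"
  shows "frobenius L = int f \<longleftrightarrow> f \<notin> L \<and> (\<forall>n>f. n \<in> L)"
proof
  assume H: "frobenius L = int f"
  then have c: "conductor L = Suc f" unfolding frobenius_def by simp
  have fin: "finite (- L)" using assms unfolding numerical_semigroup_def by auto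
  obtain B where B: "\<forall>x\<in>-L. x < B" using fin finite_nat_set_iff_bounded by blast
  have ex: "\<forall>n\<ge>B. n \<in> L" using B by (meson ComplI leD)
  have 1: "\<forall>n\<ge>conductor L. n \<in> L"
    unfolding conductor_def by (rule LeastI[of _ B]) (use ex in auto)
  have 2: "f \<notin> L"
  proof
    assume "f \<in> L"
    then have "\<forall>n\<ge>f. n \<in> L" using 1 c by (metis Suc_le_eq le_neq_implies_less)
    then have "conductor L \<le> f" unfolding conductor_def by (rule Least_le)
    then show False using c by simp
  qed
  show "f \<notin> L \<and> (\<forall>n>f. n \<in> L)" using 1 2 c by auto
next
  assume "f \<notin> L \<and> (\<forall>n>f. n \<in> L)"
  then show "frobenius L = int f" using conductor_eq unfolding frobenius_def by auto
qed

lemma Sg_iff: "{L. numerical_semigroup L \<and> frobenius L = int f} = Sg f"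
proof -
  have "numerical_semigroup L \<and> frobenius L = int f \<longleftrightarrow> L \<in> Sg f" for L
  proof
    assume "numerical_semigroup L \<and> frobenius L = int f"
    then show "L \<in> Sg f" using ns_frob_iff unfolding Sg_def numerical_semigroup_def by auto
  next
    assume H: "L \<in> Sg f"
    have "- L \<subseteq> {..f}" using H unfolding Sg_def by (auto simp: not_less[symmetric])
    then have "finite (- L)" using finite_subset by blast
    then have ns: "numerical_semigroup L" using H unfolding Sg_def numerical_semigroup_def by auto
    then show "numerical_semigroup L \<and> frobenius L = int f" using ns_frob_iff H unfolding Sg_def by auto
  qed
  then show ?thesis by auto
qed

lemma Fr_Sg: "Fr f = card (Sg f)"
  unfolding Fr_def Sg_iff ..

lemma S_Nm: "S j = Nm (3 * j + 2) (j + 1)"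
proof -
  have "{L. numerical_semigroup L \<and> multiplicity L = j + 1 \<and> frobenius L = int (3 * j + 2)}
      = {L \<in> Sg (3*j+2). multiplicity L = j + 1}" using Sg_iff[of "3*j+2"] by auto
  then show ?thesis unfolding S_def Nm_def by simp
qed

lemma finite_Sg: "finite (Sg f)"
proof -
  have "Sg f \<subseteq> (\<lambda>A. A \<union> {f<..}) ` Pow {..f}"
  proof
    fix L assume H: "L \<in> Sg f"
    have "L = (L \<inter> {..f}) \<union> {f<..}" using H unfolding Sg_def by auto
    then show "L \<in> (\<lambda>A. A \<union> {f<..}) ` Pow {..f}" by blast
  qed
  then show ?thesis by (rule finite_subset) auto
qed

lemma Sg_add_mult:
  assumes "L \<in> Sg f" "x \<in> L" "y \<in> L" shows "x + y \<in> L"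
  using assms unfolding Sg_def by auto

lemma Sg_zero: "L \<in> Sg f \<Longrightarrow> 0 \<in> L" unfolding Sg_def by auto
lemma Sg_notf: "L \<in> Sg f \<Longrightarrow> f \<notin> L" unfolding Sg_def by auto
lemma Sg_big: "L \<in> Sg f \<Longrightarrow> n > f \<Longrightarrow> n \<in> L" unfolding Sg_def by auto

lemma Sg_times:
  assumes "L \<in> Sg f" "x \<in> L" shows "k * x \<in> L"
proof (induction k)
  case 0 then show ?case using Sg_zero[OF assms(1)] by simp
next
  case (Suc k) then show ?case using Sg_add_mult[OF assms(1) assms(2) Suc.IH] by simp
qed

lemma Sg_plus_times:
  assumes "L \<in> Sg f" "x \<in> L" "y \<in> L" shows "x + k * y \<in> L"
  using Sg_add_mult[OF assms(1) assms(2) Sg_times[OF assms(1) assms(3)]] .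

lemma mult_props:
  assumes "L \<in> Sg f"
  shows "multiplicity L \<in> L" "0 < multiplicity L" "multiplicity L \<le> Suc f"
    "\<And>x. 0 < x \<Longrightarrow> x < multiplicity L \<Longrightarrow> x \<notin> L"
proof -
  have w: "Suc f \<in> L \<and> 0 < Suc f" using Sg_big[OF assms] by auto
  have "multiplicity L \<in> L \<and> 0 < multiplicity L" unfolding multiplicity_def
    by (rule LeastI[of _ "Suc f"]) (rule w)
  then show "multiplicity L \<in> L" "0 < multiplicity L" by auto
  show "multiplicity L \<le> Suc f" unfolding multiplicity_def by (rule Least_le) (rule w)
  fix x assume "0 < x" "x < multiplicity L"
  then show "x \<notin> L" unfolding multiplicity_def using not_less_Least by blast
qed

lemma mult_ge2:
  assumes "L \<in> Sg f" shows "2 \<le> multiplicity L"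
proof (rule ccontr)
  assume "\<not> 2 \<le> multiplicity L"
  then have "multiplicity L = 1" using mult_props(2)[OF assms] by linarith
  then have "1 \<in> L" using mult_props(1)[OF assms] by simp
  then have "f * 1 \<in> L" using Sg_times[OF assms] by blast
  then show False using Sg_notf[OF assms] by simp
qed

lemma mult_not_f: "L \<in> Sg f \<Longrightarrow> multiplicity L \<noteq> f"
  using mult_props(1) Sg_notf by metis

lemma mult_eqI:
  assumes "m \<in> L" "0 < m" "\<And>x. 0 < x \<Longrightarrow> x < m \<Longrightarrow> x \<notin> L"
  shows "multiplicity L = m"
  unfolding multiplicity_def
  by (rule Least_equality) (use assms in \<open>auto simp: not_less[symmetric]\<close>)

lemma Fr_sum: "Fr f = (\<Sum>m\<in>{1..Suc f}. Nm f m)"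
proof -
  have "Sg f = (\<Union>m\<in>{1..Suc f}. {L \<in> Sg f. multiplicity L = m})"
    using mult_props by (auto simp: Suc_le_eq)
  then have "card (Sg f) = card (\<Union>m\<in>{1..Suc f}. {L \<in> Sg f. multiplicity L = m})" by simp
  also have "\<dots> = (\<Sum>m\<in>{1..Suc f}. card {L \<in> Sg f. multiplicity L = m})"
    by (rule card_UN_disjoint) (use finite_Sg in auto)
  finally show ?thesis unfolding Fr_Sg Nm_def .
qed

lemma Nm_big:
  assumes "f < 2 * m" "m < f"
  shows "Nm f m = 2 ^ (f - 1 - m)"
proof -
  let ?X = "{L \<in> Sg f. multiplicity L = m}"
  let ?g = "\<lambda>L. L \<inter> {m<..<f}"
  let ?h = "\<lambda>A. {0, m} \<union> A \<union> {f<..}"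
  have m0: "0 < m" using assms by simp
  have inv1: "?h (?g L) = L" if "L \<in> ?X" for L
  proof -
    have L: "L \<in> Sg f" "multiplicity L = m" using that by auto
    have "x \<in> L \<longleftrightarrow> x \<in> ?h (?g L)" for x
    proof (cases "x = 0 \<or> x = m")
      case True then show ?thesis using Sg_zero[OF L(1)] mult_props(1)[OF L(1)] L(2) by auto
    next
      case False
      then have "x \<in> L \<longleftrightarrow> (m < x \<and> x < f \<and> x \<in> L) \<or> f < x"
        using mult_props(4)[OF L(1)] L(2) Sg_notf[OF L(1)] Sg_big[OF L(1)]
        by (metis linorder_neqE_nat neq0_conv)
      then show ?thesis using False by auto
    qed
    then show ?thesis by blast
  qed
  have inv2: "?g (?h A) = A" if "A \<subseteq> {m<..<f}" for A
    using that assms by auto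
  have mem: "?h A \<in> ?X" if "A \<subseteq> {m<..<f}" for A
  proof -
    have cl: "x + y \<in> ?h A" if "x \<in> ?h A" "y \<in> ?h A" for x y
    proof (cases "x = 0 \<or> y = 0")
      case True then show ?thesis using that by auto
    next
      case False
      then have "x \<ge> m" "y \<ge> m" using that \<open>A \<subseteq> _\<close> assms by auto
      then show ?thesis using assms by auto
    qed
    have S: "?h A \<in> Sg f" unfolding Sg_def using cl that assms by auto
    have "multiplicity (?h A) = m"
      by (rule mult_eqI) (use that m0 assms in auto)
    then show ?thesis using S by auto
  qed
  have "bij_betw ?g ?X (Pow {m<..<f})"
  proof (rule bij_betw_byWitness[where f' = ?h])
    show "\<forall>a\<in>?X. ?h (?g a) = a" using inv1 by blast
    show "\<forall>a'\<in>Pow {m<..<f}. ?g (?h a') = a'" using inv2 by blast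
    show "?g ` ?X \<subseteq> Pow {m<..<f}" by auto
    show "?h ` Pow {m<..<f} \<subseteq> ?X" using mem by blast
  qed
  then have "card ?X = card (Pow {m<..<f})" by (rule bij_betw_same_card)
  also have "\<dots> = 2 ^ (f - 1 - m)" by (simp add: card_Pow)
  finally show ?thesis unfolding Nm_def .
qed

lemma Nm_top: assumes "0 < f" shows "Nm f (Suc f) = 1"
proof -
  have "{L \<in> Sg f. multiplicity L = Suc f} = {{0} \<union> {f<..}}"
  proof
    show "{L \<in> Sg f. multiplicity L = Suc f} \<subseteq> {{0} \<union> {f<..}}"
    proof
      fix L assume H: "L \<in> {L \<in> Sg f. multiplicity L = Suc f}"
      then have L: "L \<in> Sg f" "multiplicity L = Suc f" by auto
      have "x \<in> L \<longleftrightarrow> x \<in> {0} \<union> {f<..}" for x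
        using Sg_zero[OF L(1)] Sg_big[OF L(1)] mult_props(4)[OF L(1)] L(2) Sg_notf[OF L(1)]
      proof (cases "x = 0")
        case False
        have "f < x" if "x \<in> L"
        proof (rule ccontr)
          assume "\<not> f < x"
          then have "x < multiplicity L" using L(2) by simp
          then show False using mult_props(4)[OF L(1)] False that by auto
        qed
        then show ?thesis using False Sg_big[OF L(1)] by auto
      qed (use Sg_zero[OF L(1)] in auto)
      then show "L \<in> {{0} \<union> {f<..}}" by blast
    qed
  next
    have S: "{0} \<union> {f<..} \<in> Sg f" using \<open>0 < f\<close> unfolding Sg_def by auto
    have "multiplicity ({0} \<union> {f<..}) = Suc f" by (rule mult_eqI) auto
    then show "{{0} \<union> {f<..}} \<subseteq> {L \<in> Sg f. multiplicity L = Suc f}" using S by auto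
  qed
  then show ?thesis unfolding Nm_def by simp
qed

lemma Nm_f: "Nm f f = 0"
proof -
  have "{L \<in> Sg f. multiplicity L = f} = {}" using mult_not_f by blast
  then show ?thesis unfolding Nm_def by (metis card.empty)
qed

lemma Nm_half: "Nm (2 * n) n = 0"
proof -
  have "{L \<in> Sg (2*n). multiplicity L = n} = {}"
  proof (rule ccontr)
    assume "{L \<in> Sg (2*n). multiplicity L = n} \<noteq> {}"
    then obtain L where L: "L \<in> Sg (2*n)" "multiplicity L = n" by auto
    then have "n \<in> L" using mult_props(1) by metis
    then have "n + n \<in> L" using Sg_add_mult[OF L(1)] by blast
    then show False using Sg_notf[OF L(1)] by (simp add: mult_2)
  qed
  then show ?thesis unfolding Nm_def by (metis card.empty)
qed

lemma Nm_one: "Nm f 1 = 0"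
proof -
  have "{L \<in> Sg f. multiplicity L = 1} = {}" using mult_ge2 by fastforce
  then show ?thesis unfolding Nm_def by (metis card.empty)
qed

definition Valid :: "nat \<Rightarrow> (nat set \<times> nat set) set" where
  "Valid d = {(I, J). I \<subseteq> {1..<d} \<and> J \<subseteq> {1..<d} \<and> I \<subseteq> J \<and>
     (\<forall>i\<in>I. \<forall>i'\<in>I. i + i' \<noteq> d \<and> (i + i' < d \<longrightarrow> i + i' \<in> J))}"

lemma Nm_mid_Valid:
  assumes d: "1 \<le> d" and md: "d + 1 \<le> m"
  shows "Nm (2 * m + d) m = card (Valid d) * 2 ^ (m - 1 - d)"
proof -
  define f where "f = 2 * m + d"
  let ?X = "{L \<in> Sg f. multiplicity L = m}"
  let ?g = "\<lambda>L. (({i \<in> {1..<d}. m + i \<in> L}, {j \<in> {1..<d}. 2 * m + j \<in> L}),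
                   {i \<in> {d<..<m}. m + i \<in> L})"
  let ?h = "\<lambda>((I, J), F). {0, m, 2 * m} \<union> ((+) m ` I) \<union> ((+) (2 * m) ` J) \<union> ((+) m ` F) \<union> {f<..}"
  have inv1: "?h (?g L) = L" if "L \<in> ?X" for L
  proof -
    have L: "L \<in> Sg f" "multiplicity L = m" using that by auto
    have mL: "m \<in> L" using mult_props(1)[OF L(1)] L(2) by simp
    have m2L: "2 * m \<in> L" using Sg_add_mult[OF L(1) mL mL] by (simp add: mult_2)
    have nd: "m + d \<notin> L"
    proof
      assume "m + d \<in> L"
      then have "m + (m + d) \<in> L" using Sg_add_mult[OF L(1) mL] by blast
      moreover have "m + (m + d) = f" unfolding f_def by simp
      ultimately show False using Sg_notf[OF L(1)] by metis
    qed
    have "x \<in> L \<longleftrightarrow> x \<in> ?h (?g L)" for x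
    proof -
      consider "x = 0" | "0 < x \<and> x < m" | "x = m" | "m < x \<and> x < m + d" | "x = m + d"
        | "m + d < x \<and> x < 2 * m" | "x = 2 * m" | "2 * m < x \<and> x < f" | "x = f" | "f < x"
        unfolding f_def by linarith
      then show ?thesis
      proof cases
        case 1 then show ?thesis using Sg_zero[OF L(1)] by auto
      next
        case 2 then show ?thesis using mult_props(4)[OF L(1)] L(2) unfolding f_def by auto
      next
        case 3 then show ?thesis using mL by auto
      next
        case 4
        then have "x \<in> (+) m ` {i \<in> {1..<d}. m + i \<in> L} \<longleftrightarrow> x \<in> L"
          using md by (auto intro!: image_eqI[where x = "x - m"])
        then show ?thesis using 4 md unfolding f_def by auto
      next
        case 5 then show ?thesis using nd d md unfolding f_def by auto
      next
        case 6
        then have "x \<in> (+) m ` {i \<in> {d<..<m}. m + i \<in> L} \<longleftrightarrow> x \<in> L"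
          using md by (auto intro!: image_eqI[where x = "x - m"])
        then show ?thesis using 6 md unfolding f_def by auto
      next
        case 7 then show ?thesis using m2L by simp
      next
        case 8
        then have "x \<in> (+) (2*m) ` {j \<in> {1..<d}. 2*m + j \<in> L} \<longleftrightarrow> x \<in> L"
          unfolding f_def by (auto intro!: image_eqI[where x = "x - 2*m"])
        then show ?thesis using 8 md unfolding f_def by auto
      next
        case 9 then show ?thesis using Sg_notf[OF L(1)] d md unfolding f_def by auto
      next
        case 10 then show ?thesis using Sg_big[OF L(1)] by auto
      qed
    qed
    then show ?thesis by blast
  qed
  have inv2: "?g (?h x) = x" if "x \<in> Valid d \<times> Pow {d<..<m}" for x
  proof -
    obtain I J F where x: "x = ((I, J), F)" by (metis prod.collapse)
    have V: "I \<subseteq> {1..<d}" "J \<subseteq> {1..<d}" "F \<subseteq> {d<..<m}"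
      using that unfolding x Valid_def by auto
    have "{i \<in> {1..<d}. m + i \<in> ?h x} = I"
      using V md unfolding x f_def by auto
    moreover have "{j \<in> {1..<d}. 2 * m + j \<in> ?h x} = J"
      using V md unfolding x f_def by auto
    moreover have "{i \<in> {d<..<m}. m + i \<in> ?h x} = F"
      using V md unfolding x f_def by auto
    ultimately show ?thesis unfolding x by simp
  qed
  have mem: "?h x \<in> ?X" if "x \<in> Valid d \<times> Pow {d<..<m}" for x
  proof -
    obtain I J F where x: "x = ((I, J), F)" by (metis prod.collapse)
    have V: "I \<subseteq> {1..<d}" "J \<subseteq> {1..<d}" "F \<subseteq> {d<..<m}" "I \<subseteq> J"
      "\<And>i i'. i \<in> I \<Longrightarrow> i' \<in> I \<Longrightarrow> i + i' \<noteq> d"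
      "\<And>i i'. i \<in> I \<Longrightarrow> i' \<in> I \<Longrightarrow> i + i' < d \<Longrightarrow> i + i' \<in> J"
      using that unfolding x Valid_def by auto
    let ?A = "?h x"
    have low: "\<And>y. y \<in> ?A \<Longrightarrow> y = 0 \<or> (\<exists>a. y = m + a \<and> (a = 0 \<or> a \<in> I \<or> a \<in> F)) \<or> 2 * m \<le> y"
      unfolding x f_def by auto
    have cl: "y + z \<in> ?A" if yA: "y \<in> ?A" and zA: "z \<in> ?A" for y z
    proof -
      consider "y = 0" | "z = 0" | "2 * m \<le> y" | "2 * m \<le> z"
        | "\<exists>a b. y = m + a \<and> z = m + b \<and> (a = 0 \<or> a \<in> I \<or> a \<in> F) \<and> (b = 0 \<or> b \<in> I \<or> b \<in> F)"
        using low[OF yA] low[OF zA] by blast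
      then show ?thesis
      proof cases
        case 1 then show ?thesis using that by simp
      next
        case 2 then show ?thesis using that by simp
      next
        case 3
        show ?thesis
        proof (cases "z = 0")
          case True then show ?thesis using yA by simp
        next
          case False
          then have "m \<le> z" using low[OF zA] by auto
          then have "f < y + z" using 3 md unfolding f_def by linarith
          then show ?thesis unfolding x by auto
        qed
      next
        case 4
        show ?thesis
        proof (cases "y = 0")
          case True then show ?thesis using zA by simp
        next
          case False
          then have "m \<le> y" using low[OF yA] by auto
          then have "f < y + z" using 4 md unfolding f_def by linarith
          then show ?thesis unfolding x by auto
        qed
      next
        case 5
        then obtain a b where ab: "y = m + a" "z = m + b" "a = 0 \<or> a \<in> I \<or> a \<in> F" "b = 0 \<or> b \<in> I \<or> b \<in> F"
          by blast
        have yz: "y + z = 2 * m + (a + b)" using ab by simp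
        consider "a + b = 0" | "0 < a + b \<and> a + b < d" | "a + b = d" | "d < a + b" by linarith
        then show ?thesis
        proof cases
          case 1 then show ?thesis unfolding yz x by simp
        next
          case 2
          then have "a \<notin> F" "b \<notin> F" using V(3) by auto
          then have "a + b \<in> J" using ab V 2 by (auto)
          then show ?thesis unfolding yz x by simp
        next
          case 3
          then have "a \<notin> F" "b \<notin> F" using V(3) by auto
          then have A: "a = 0 \<or> a \<in> I" "b = 0 \<or> b \<in> I" using ab by auto
          have False
          proof (cases "a = 0")
            case True
            then have "b \<in> I" using A 3 d by auto
            then show False using V(1) 3 True by auto
          next
            case False
            then have "a \<in> I" using A by auto
            moreover have "b \<in> I"
            proof (cases "b = 0")
              case True then show ?thesis using \<open>a \<in> I\<close> V(1) 3 by auto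
            qed (use A in auto)
            ultimately show False using V(5)[of a b] 3 by auto
          qed
          then show ?thesis ..
        next
          case 4 then show ?thesis unfolding yz x f_def by simp
        qed
      qed
    qed
    have nf: "f \<notin> ?A"
      using V md d unfolding x f_def by auto
    have S: "?A \<in> Sg f" unfolding Sg_def using cl nf unfolding x by auto
    have "multiplicity ?A = m"
    proof (rule mult_eqI)
      show "m \<in> ?A" unfolding x by simp
      show "0 < m" using md by simp
      show "\<And>y. 0 < y \<Longrightarrow> y < m \<Longrightarrow> y \<notin> ?A" using md unfolding x f_def by auto
    qed
    then show ?thesis using S by auto
  qed
  have gX: "?g L \<in> Valid d \<times> Pow {d<..<m}" if "L \<in> ?X" for L
  proof -
    have L: "L \<in> Sg f" "multiplicity L = m" using that by auto
    have mL: "m \<in> L" using mult_props(1)[OF L(1)] L(2) by simp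
    let ?I = "{i \<in> {1..<d}. m + i \<in> L}" and ?J = "{j \<in> {1..<d}. 2 * m + j \<in> L}"
    have "?I \<subseteq> ?J"
    proof
      fix i assume "i \<in> ?I"
      then have "m + (m + i) \<in> L" using Sg_add_mult[OF L(1) mL] by blast
      then show "i \<in> ?J" using \<open>i \<in> ?I\<close> by (simp add: mult_2 add.assoc)
    qed
    moreover have "i + i' \<noteq> d \<and> (i + i' < d \<longrightarrow> i + i' \<in> ?J)" if "i \<in> ?I" "i' \<in> ?I" for i i'
    proof -
      have "(m + i) + (m + i') \<in> L" using that Sg_add_mult[OF L(1)] by blast
      moreover have "(m + i) + (m + i') = 2 * m + (i + i')" by simp
      ultimately have s: "2 * m + (i + i') \<in> L" by metis
      then have "i + i' \<noteq> d" using Sg_notf[OF L(1)] unfolding f_def by auto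
      moreover have "i + i' < d \<longrightarrow> i + i' \<in> ?J" using s that by auto
      ultimately show ?thesis by blast
    qed
    ultimately show ?thesis unfolding Valid_def by auto
  qed
  have "bij_betw ?g ?X (Valid d \<times> Pow {d<..<m})"
  proof (rule bij_betw_byWitness[where f' = ?h])
    show "\<forall>a\<in>?X. ?h (?g a) = a" using inv1 by blast
    show "\<forall>a'\<in>Valid d \<times> Pow {d<..<m}. ?g (?h a') = a'" using inv2 by blast
    show "?g ` ?X \<subseteq> Valid d \<times> Pow {d<..<m}" using gX by blast
    show "?h ` (Valid d \<times> Pow {d<..<m}) \<subseteq> ?X" using mem by blast
  qed
  then have "card ?X = card (Valid d \<times> Pow {d<..<m})" by (rule bij_betw_same_card)
  also have "\<dots> = card (Valid d) * 2 ^ (m - 1 - d)"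
  proof -
    have "finite (Valid d)"
      by (rule finite_subset[of _ "Pow {1..<d} \<times> Pow {1..<d}"]) (auto simp: Valid_def)
    then show ?thesis by (simp add: card_cartesian_product card_Pow)
  qed
  finally show ?thesis unfolding Nm_def f_def .
qed

lemma Nm_mid:
  assumes d: "1 \<le> d" and md: "d + 1 \<le> m"
  shows "Nm (2 * m + d) m = S d * 2 ^ (m - 1 - d)"
proof -
  have "S d = card (Valid d)"
    using Nm_mid_Valid[OF d order_refl] unfolding S_Nm by (simp add: algebra_simps)
  then show ?thesis using Nm_mid_Valid[OF assms] by simp
qed

definition wK :: "nat set \<Rightarrow> nat \<Rightarrow> nat \<Rightarrow> nat" where
  "wK L m r = (LEAST x. x \<in> L \<and> x mod m = r)"

definition kK :: "nat set \<Rightarrow> nat \<Rightarrow> nat \<Rightarrow> nat" where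
  "kK L m r = wK L m r div m"

locale kunz =
  fixes L f m
  assumes LS: "L \<in> Sg f" and mdef: "m = multiplicity L"
begin

lemma m2: "2 \<le> m" using mult_ge2[OF LS] mdef by simp
lemma mL: "m \<in> L" using mult_props(1)[OF LS] mdef by simp
lemma below: "0 < x \<Longrightarrow> x < m \<Longrightarrow> x \<notin> L" using mult_props(4)[OF LS] mdef by simp

lemma w_mem: assumes "r < m" shows "wK L m r \<in> L" "wK L m r mod m = r"
proof -
  have "(Suc f * m + r) \<in> L \<and> (Suc f * m + r) mod m = r"
  proof
    have "f \<le> f * m" using m2 by simp
    moreover have "Suc f * m + r = m + f * m + r" by simp
    ultimately have "f < Suc f * m + r" using m2 by linarith
    then show "Suc f * m + r \<in> L" using Sg_big[OF LS] by blast
    show "(Suc f * m + r) mod m = r" by (simp only: mod_mult_self3) (simp add: assms)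
  qed
  then have "wK L m r \<in> L \<and> wK L m r mod m = r" unfolding wK_def by (rule LeastI)
  then show "wK L m r \<in> L" "wK L m r mod m = r" by auto
qed

lemma w_le: "x \<in> L \<Longrightarrow> wK L m (x mod m) \<le> x"
  unfolding wK_def by (rule Least_le) simp

lemma mem_iff: "x \<in> L \<longleftrightarrow> wK L m (x mod m) \<le> x"
proof
  assume "x \<in> L" then show "wK L m (x mod m) \<le> x" by (rule w_le)
next
  assume H: "wK L m (x mod m) \<le> x"
  let ?w = "wK L m (x mod m)"
  have wm: "?w \<in> L" "?w mod m = x mod m" using w_mem m2 by auto
  have "m dvd (x - ?w)" using mod_eq_dvd_iff_nat[OF H, of m] wm(2) by simp
  then obtain j where j: "x - ?w = m * j" by blast
  then have "x = ?w + m * j" using H by linarith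
  then show "x \<in> L" using Sg_plus_times[OF LS wm(1) mL, of j] by (simp add: mult.commute)
qed

lemma w0: "wK L m 0 = 0"
proof -
  have "wK L m 0 \<le> 0" using w_le[of 0] Sg_zero[OF LS] by simp
  then show ?thesis by simp
qed

lemma w_eq: assumes "r < m" shows "wK L m r = r + m * kK L m r"
proof -
  have e: "wK L m r div m * m + r = wK L m r"
    using div_mult_mod_eq[of "wK L m r" m] w_mem(2)[OF assms] by simp
  show ?thesis unfolding kK_def using e by (metis add.commute mult.commute)
qed

lemma k_ge1: assumes "1 \<le> r" "r < m" shows "1 \<le> kK L m r"
proof (rule ccontr)
  assume "\<not> 1 \<le> kK L m r"
  then have "wK L m r = r" using w_eq[OF assms(2)] by simp
  then show False using w_mem(1)[OF assms(2)] below assms by auto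
qed

lemma s_pos: "0 < f mod m"
proof (rule ccontr)
  assume "\<not> 0 < f mod m"
  then have "f = (f div m) * m" using div_mult_mod_eq[of f m] by simp
  then have "f \<in> L" using Sg_times[OF LS mL, of "f div m"] by simp
  then show False using Sg_notf[OF LS] by simp
qed

lemma w_minus: assumes "r < m" "1 \<le> r" shows "wK L m r - m \<le> f"
proof (rule ccontr)
  assume "\<not> wK L m r - m \<le> f"
  then have "wK L m r - m \<in> L" using Sg_big[OF LS] by simp
  moreover have "m \<le> wK L m r"
  proof -
    have "m * 1 \<le> m * kK L m r" using k_ge1[OF assms(2,1)] by (rule mult_le_mono2)
    then show ?thesis using w_eq[OF assms(1)] by linarith
  qed
  ultimately have "wK L m ((wK L m r - m) mod m) \<le> wK L m r - m" using w_le by blast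
  moreover have "(wK L m r - m) mod m = r" using w_mem(2)[OF assms(1)] \<open>m \<le> wK L m r\<close>
    using le_mod_geq[of m "wK L m r"] by simp
  ultimately show False using \<open>m \<le> wK L m r\<close> m2 by auto
qed

lemma fqs: "f = m * (f div m) + f mod m" by simp
lemma s_less: "f mod m < m" using m2 by simp

lemma k_upper_aux: assumes "1 \<le> r" "r < m"
  obtains k' where "kK L m r = Suc k'" "r + m * k' \<le> f"
proof -
  obtain k' where k': "kK L m r = Suc k'" using k_ge1[OF assms] by (cases "kK L m r") auto
  have "r + m * kK L m r - m \<le> f" using w_minus[OF assms(2,1)] w_eq[OF assms(2)] by simp
  then have "r + m * k' \<le> f" using k' by simp
  then show ?thesis using k' that by blast
qed

lemma k_upper_low: assumes "1 \<le> r" "r < m" shows "kK L m r \<le> f div m + 1"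
proof -
  obtain k' where k': "kK L m r = Suc k'" "r + m * k' \<le> f" using k_upper_aux[OF assms] .
  have "k' \<le> f div m"
  proof (rule ccontr)
    assume "\<not> k' \<le> f div m"
    then have "m * (f div m + 1) \<le> m * k'" by (intro mult_le_mono2) simp
    then show False using k'(2) fqs s_less by (simp add: distrib_left)
  qed
  then show ?thesis using k' by simp
qed

lemma k_upper_up: assumes "f mod m < r" "r < m" shows "kK L m r \<le> f div m"
proof -
  have r1: "1 \<le> r" using assms s_pos by simp
  obtain k' where k': "kK L m r = Suc k'" "r + m * k' \<le> f" using k_upper_aux[OF r1 assms(2)] .
  have "k' < f div m"
  proof (rule ccontr)
    assume "\<not> k' < f div m"
    then have "m * (f div m) \<le> m * k'" by (intro mult_le_mono2) simp
    then show False using k'(2) fqs assms(1) by linarith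
  qed
  then show ?thesis using k' by simp
qed

lemma w_sum_ge: assumes "r < m" "r' < m" shows "wK L m ((r + r') mod m) \<le> wK L m r + wK L m r'"
proof -
  have "wK L m r + wK L m r' \<in> L" using Sg_add_mult[OF LS w_mem(1)[OF assms(1)] w_mem(1)[OF assms(2)]] .
  moreover have "(wK L m r + wK L m r') mod m = (r + r') mod m"
    using w_mem(2)[OF assms(1)] w_mem(2)[OF assms(2)] mod_add_eq[of "wK L m r" m "wK L m r'"] by simp
  ultimately show ?thesis using w_le by metis
qed

lemma k_sum: assumes "1 \<le> r" "1 \<le> r'" "r + r' < m"
  shows "kK L m (r + r') \<le> kK L m r + kK L m r'"
proof -
  have rm: "r < m" "r' < m" using assms by auto
  have "wK L m (r + r') \<le> wK L m r + wK L m r'" using w_sum_ge[OF rm] assms(3) by simp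
  then have "r + r' + m * kK L m (r + r') \<le> r + r' + m * (kK L m r + kK L m r')"
    using w_eq[OF assms(3)] w_eq[OF rm(1)] w_eq[OF rm(2)] by (simp add: distrib_left)
  then show ?thesis using m2 by simp
qed

lemma w_pair_gt: assumes "r < m" "r' < m" "(r + r') mod m = f mod m"
  shows "f < wK L m r + wK L m r'"
proof (rule ccontr)
  assume "\<not> f < wK L m r + wK L m r'"
  then have "wK L m (f mod m) \<le> f" using w_sum_ge[OF assms(1,2)] assms(3) by simp
  then have "f \<in> L" using mem_iff by blast
  then show False using Sg_notf[OF LS] by simp
qed

lemma k_pair_low: assumes "1 \<le> r" "r < f mod m"
  shows "f div m + 1 \<le> kK L m r + kK L m (f mod m - r)"
proof -
  have rm: "r < m" "f mod m - r < m" using assms s_less by auto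
  have "f < wK L m r + wK L m (f mod m - r)" using w_pair_gt[OF rm] assms s_less by simp
  also have "\<dots> = f mod m + m * (kK L m r + kK L m (f mod m - r))"
    using w_eq[OF rm(1)] w_eq[OF rm(2)] assms by (simp add: distrib_left)
  finally have "m * (f div m) < m * (kK L m r + kK L m (f mod m - r))" using fqs by linarith
  then have "f div m < kK L m r + kK L m (f mod m - r)" using mult_less_cancel1 by blast
  then show ?thesis by simp
qed

lemma k_pair_up: assumes "f mod m < r" "r < m"
  shows "f div m \<le> kK L m r + kK L m (m + f mod m - r)"
proof -
  have rm: "r < m" "m + f mod m - r < m" using assms s_less by auto
  have "(r + (m + f mod m - r)) mod m = f mod m" using assms s_less by simp
  then have "f < wK L m r + wK L m (m + f mod m - r)" using w_pair_gt[OF rm] by simp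
  also have "\<dots> = m + f mod m + m * (kK L m r + kK L m (m + f mod m - r))"
    using w_eq[OF rm(1)] w_eq[OF rm(2)] assms by (simp add: distrib_left)
  finally have A: "f < m + f mod m + m * (kK L m r + kK L m (m + f mod m - r))" .
  have B: "m * (1 + kK L m r + kK L m (m + f mod m - r)) = m + m * (kK L m r + kK L m (m + f mod m - r))"
    by (simp add: distrib_left)
  have "m * (f div m) < m * (1 + kK L m r + kK L m (m + f mod m - r))"
    unfolding B using A fqs by linarith
  then have "f div m < 1 + kK L m r + kK L m (m + f mod m - r)" using mult_less_cancel1 by blast
  then show ?thesis by simp
qed

end

lemma kunz_inj:
  assumes "kunz L f m" "kunz L' f m" "\<And>r. 1 \<le> r \<Longrightarrow> r < m \<Longrightarrow> kK L m r = kK L' m r"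
  shows "L = L'"
proof -
  interpret A: kunz L f m by fact
  interpret B: kunz L' f m by fact
  have "wK L m r = wK L' m r" if "r < m" for r
  proof (cases "r = 0")
    case True then show ?thesis using A.w0 B.w0 by simp
  next
    case False then show ?thesis using A.w_eq[OF that] B.w_eq[OF that] assms(3)[of r] that by simp
  qed
  then have "x \<in> L \<longleftrightarrow> x \<in> L'" for x using A.mem_iff[of x] B.mem_iff[of x] A.m2 by simp
  then show ?thesis by blast
qed

definition KP :: "nat \<Rightarrow> nat \<Rightarrow> (nat \<Rightarrow> nat) \<Rightarrow> bool" where
  "KP f m v \<longleftrightarrow> (\<forall>r. 1 \<le> r \<longrightarrow> r < m \<longrightarrow> 1 \<le> v r) \<and>
     (\<forall>r. 1 \<le> r \<longrightarrow> r < m \<longrightarrow> v r \<le> f div m + 1) \<and>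
     (\<forall>r. f mod m < r \<longrightarrow> r < m \<longrightarrow> v r \<le> f div m) \<and>
     (\<forall>r r'. 1 \<le> r \<longrightarrow> 1 \<le> r' \<longrightarrow> r + r' < m \<longrightarrow> v (r + r') \<le> v r + v r') \<and>
     (\<forall>r. 1 \<le> r \<longrightarrow> r < f mod m \<longrightarrow> f div m + 1 \<le> v r + v (f mod m - r)) \<and>
     (\<forall>r. f mod m < r \<longrightarrow> r < m \<longrightarrow> f div m \<le> v r + v (m + f mod m - r))"

definition KW :: "nat \<Rightarrow> nat \<Rightarrow> (nat \<Rightarrow> nat) set" where
  "KW f m = {v \<in> extensional {1..<m}. KP f m v}"

lemma finite_KW: "finite (KW f m)"
proof (rule finite_subset)
  show "KW f m \<subseteq> PiE {1..<m} (\<lambda>_. {..f div m + 1})"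
    unfolding KW_def KP_def by (auto simp: PiE_def Pi_def)
  show "finite (PiE {1..<m} (\<lambda>_. {..f div m + 1}))" by (rule finite_PiE) auto
qed

lemma Nm_le_KW: "Nm f m \<le> card (KW f m)"
proof -
  let ?X = "{L \<in> Sg f. multiplicity L = m}"
  let ?kv = "\<lambda>L. restrict (kK L m) {1..<m}"
  have ku: "kunz L f m" if "L \<in> ?X" for L using that by unfold_locales auto
  have "inj_on ?kv ?X"
  proof (rule inj_onI)
    fix L L' assume "L \<in> ?X" "L' \<in> ?X" and eq: "?kv L = ?kv L'"
    have "kK L m r = kK L' m r" if "1 \<le> r" "r < m" for r
    proof -
      have "?kv L r = ?kv L' r" using eq by simp
      then show ?thesis using that by simp
    qed
    then show "L = L'" using kunz_inj[OF ku ku] \<open>L \<in> ?X\<close> \<open>L' \<in> ?X\<close> by blast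
  qed
  moreover have "?kv ` ?X \<subseteq> KW f m"
  proof
    fix v assume "v \<in> ?kv ` ?X"
    then obtain L where L: "L \<in> ?X" "v = ?kv L" by blast
    interpret kunz L f m using ku[OF L(1)] .
    have "KP f m v" unfolding KP_def L(2)
    proof (intro conjI allI impI)
      fix r assume "1 \<le> r" "r < m"
      then show "1 \<le> restrict (kK L m) {1..<m} r" using k_ge1 by simp
      show "restrict (kK L m) {1..<m} r \<le> f div m + 1" using k_upper_low \<open>1 \<le> r\<close> \<open>r < m\<close> by simp
    next
      fix r assume "f mod m < r" "r < m"
      then show "restrict (kK L m) {1..<m} r \<le> f div m" using k_upper_up s_pos by simp
    next
      fix r r' assume "1 \<le> r" "1 \<le> r'" "r + r' < m"
      then show "restrict (kK L m) {1..<m} (r + r') \<le> restrict (kK L m) {1..<m} r + restrict (kK L m) {1..<m} r'"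
        using k_sum by simp
    next
      fix r assume "1 \<le> r" "r < f mod m"
      have A: "restrict (kK L m) {1..<m} r = kK L m r" using \<open>r < f mod m\<close> \<open>1 \<le> r\<close> s_less by simp
      have B: "restrict (kK L m) {1..<m} (f mod m - r) = kK L m (f mod m - r)" using \<open>r < f mod m\<close> s_less by auto
      show "f div m + 1 \<le> restrict (kK L m) {1..<m} r + restrict (kK L m) {1..<m} (f mod m - r)"
        unfolding A B using k_pair_low \<open>r < f mod m\<close> \<open>1 \<le> r\<close> by simp
    next
      fix r assume "f mod m < r" "r < m"
      moreover have "m + f mod m - r \<in> {1..<m}" using \<open>f mod m < r\<close> \<open>r < m\<close> by auto
      ultimately show "f div m \<le> restrict (kK L m) {1..<m} r + restrict (kK L m) {1..<m} (m + f mod m - r)"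
        using k_pair_up s_less by simp
    qed
    then show "v \<in> KW f m" unfolding KW_def L(2) by auto
  qed
  ultimately show ?thesis unfolding Nm_def by (intro card_inj_on_le finite_KW)
qed

lemma card_le_prod_reps:
  fixes W :: "('a \<Rightarrow> 'b) set" and \<beta> :: "'c \<Rightarrow> 'a set"
  assumes W: "W \<subseteq> extensional U" and R: "finite R" and cov: "U \<subseteq> (\<Union>p\<in>R. \<beta> p)"
  shows "card W \<le> (\<Prod>p\<in>R. card ((\<lambda>w. restrict w (\<beta> p)) ` W))"
proof (cases "finite W")
  case False then show ?thesis by simp
next
  case True
  let ?\<Phi> = "\<lambda>w. \<lambda>p\<in>R. restrict w (\<beta> p)"
  have inj: "inj_on ?\<Phi> W"
  proof (rule inj_onI)
    fix w w' assume ww: "w \<in> W" "w' \<in> W" "?\<Phi> w = ?\<Phi> w'"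
    show "w = w'"
    proof (rule extensionalityI[of _ U])
      show "w \<in> extensional U" "w' \<in> extensional U" using ww W by auto
      fix x assume "x \<in> U"
      then obtain p where p: "p \<in> R" "x \<in> \<beta> p" using cov by blast
      have "?\<Phi> w p = ?\<Phi> w' p" using ww(3) by simp
      then have "restrict w (\<beta> p) x = restrict w' (\<beta> p) x" using p(1) by simp
      then show "w x = w' x" using p(2) by simp
    qed
  qed
  have sub: "?\<Phi> ` W \<subseteq> PiE R (\<lambda>p. (\<lambda>w. restrict w (\<beta> p)) ` W)" by auto
  have fin: "finite (PiE R (\<lambda>p. (\<lambda>w. restrict w (\<beta> p)) ` W))"
    using R True by (intro finite_PiE) auto
  have "card W = card (?\<Phi> ` W)" using inj by (simp add: card_image)
  also have "\<dots> \<le> card (PiE R (\<lambda>p. (\<lambda>w. restrict w (\<beta> p)) ` W))" using card_mono[OF fin sub] .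
  also have "\<dots> = (\<Prod>p\<in>R. card ((\<lambda>w. restrict w (\<beta> p)) ` W))" using R by (rule card_PiE)
  finally show ?thesis .
qed

lemma card_split2:
  fixes W :: "('a \<Rightarrow> 'b) set"
  assumes W: "W \<subseteq> extensional (A \<union> B)"
  shows "card W \<le> card ((\<lambda>w. restrict w A) ` W) * card ((\<lambda>w. restrict w B) ` W)"
proof -
  have "card W \<le> (\<Prod>p\<in>{True, False}. card ((\<lambda>w. restrict w (if p then A else B)) ` W))"
    by (rule card_le_prod_reps[OF W]) auto
  then show ?thesis by simp
qed

lemma card_restrict_mono:
  assumes "W \<subseteq> W'" "finite W'"
  shows "card ((\<lambda>w. restrict w B) ` W) \<le> card ((\<lambda>w. restrict w B) ` W')"
  using assms by (intro card_mono) auto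

lemma card_restrict_1:
  assumes "\<And>w. w \<in> W \<Longrightarrow> w p \<in> A" "finite A"
  shows "card ((\<lambda>w. restrict w {p}) ` W) \<le> card A"
proof -
  have "inj_on (\<lambda>g. g p) ((\<lambda>w. restrict w {p}) ` W)"
    by (rule inj_onI) (auto intro!: extensionalityI[of _ "{p}"])
  moreover have "(\<lambda>g. g p) ` ((\<lambda>w. restrict w {p}) ` W) \<subseteq> A" using assms(1) by auto
  ultimately show ?thesis using card_inj_on_le assms(2) by blast
qed

lemma card_restrict_2:
  assumes "\<And>w. w \<in> W \<Longrightarrow> (w p, w p') \<in> A" "finite A"
  shows "card ((\<lambda>w. restrict w {p, p'}) ` W) \<le> card A"
proof -
  have "inj_on (\<lambda>g. (g p, g p')) ((\<lambda>w. restrict w {p, p'}) ` W)"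
  proof (rule inj_onI)
    fix g g' assume "g \<in> (\<lambda>w. restrict w {p, p'}) ` W" "g' \<in> (\<lambda>w. restrict w {p, p'}) ` W"
      "(g p, g p') = (g' p, g' p')"
    then show "g = g'" by (auto intro!: extensionalityI[of _ "{p, p'}"])
  qed
  moreover have "(\<lambda>g. (g p, g p')) ` ((\<lambda>w. restrict w {p, p'}) ` W) \<subseteq> A" using assms(1) by auto
  ultimately show ?thesis using card_inj_on_le assms(2) by blast
qed

lemma card_restrict_4:
  assumes "\<And>w. w \<in> W \<Longrightarrow> (w p1, w p2, w p3, w p4) \<in> A" "finite A"
  shows "card ((\<lambda>w. restrict w {p1, p2, p3, p4}) ` W) \<le> card A"
proof -
  have "inj_on (\<lambda>g. (g p1, g p2, g p3, g p4)) ((\<lambda>w. restrict w {p1, p2, p3, p4}) ` W)"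
  proof (rule inj_onI)
    fix g g' assume "g \<in> (\<lambda>w. restrict w {p1, p2, p3, p4}) ` W" "g' \<in> (\<lambda>w. restrict w {p1, p2, p3, p4}) ` W"
      "(g p1, g p2, g p3, g p4) = (g' p1, g' p2, g' p3, g' p4)"
    then show "g = g'" by (auto intro!: extensionalityI[of _ "{p1, p2, p3, p4}"])
  qed
  moreover have "(\<lambda>g. (g p1, g p2, g p3, g p4)) ` ((\<lambda>w. restrict w {p1, p2, p3, p4}) ` W) \<subseteq> A"
    using assms(1) by auto
  ultimately show ?thesis using card_inj_on_le assms(2) by blast
qed

definition P8 :: "(nat \<times> nat) set" where
  "P8 = {(x, y). x \<in> {1,2,3} \<and> y \<in> {1,2,3} \<and> 3 \<le> x + y}"

lemma P8_eq: "P8 = {(1,2),(1,3),(2,1),(2,2),(2,3),(3,1),(3,2),(3,3)}"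
  unfolding P8_def by auto

lemma card_P8: "card P8 = 8" unfolding P8_eq by simp
lemma finite_P8: "finite P8" unfolding P8_eq by simp

definition P6 :: "(nat \<times> nat) set" where
  "P6 = {(x, y). x \<in> {2,3} \<and> y \<in> {1,2,3}}"

lemma card_P6: "card P6 = 6"
proof -
  have "P6 = {2,3} \<times> {1,2,3}" unfolding P6_def by auto
  moreover have "card ({2::nat,3} \<times> {1::nat,2,3}) = 6" by (simp add: card_cartesian_product)
  ultimately show ?thesis by simp
qed
lemma finite_P6: "finite P6" unfolding P6_def by auto

definition D63 :: "(nat \<times> nat \<times> nat \<times> nat) set" where
  "D63 = {(a, b, c, d). (a, c) \<in> P8 \<and> (b, d) \<in> P8 \<and> \<not> (a = 1 \<and> b = 3)}"

lemma card_D63: "card D63 \<le> 63" "finite D63"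
proof -
  let ?g = "\<lambda>((a, c), (b, d)). (a, b, c, d)"
  have sub: "D63 \<subseteq> ?g ` (P8 \<times> P8 - {((1,2),(3,1))})" 
  proof
    fix x assume "x \<in> D63"
    then obtain a b c d where x: "x = (a, b, c, d)" "(a, c) \<in> P8" "(b, d) \<in> P8" "\<not> (a = 1 \<and> b = 3)"
      unfolding D63_def by auto
    then have "((a, c), (b, d)) \<in> P8 \<times> P8 - {((1,2),(3,1))}" by auto
    then show "x \<in> ?g ` (P8 \<times> P8 - {((1,2),(3,1))})" unfolding x(1) by force
  qed
  have fin: "finite (P8 \<times> P8 - {((1,2),(3,1))})" using finite_P8 by auto
  have c: "card (P8 \<times> P8 - {((1,2),(3,1))}) = 63"
  proof -
    have "((1::nat,2::nat),(3::nat,1::nat)) \<in> P8 \<times> P8" unfolding P8_eq by simp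
    then show ?thesis using finite_P8 card_P8 by (simp add: card_cartesian_product)
  qed
  show "finite D63" using sub fin by (meson finite_imageI finite_subset)
  have "card D63 \<le> card (?g ` (P8 \<times> P8 - {((1,2),(3,1))}))" using sub fin by (intro card_mono) auto
  also have "\<dots> \<le> 63" using card_image_le[OF fin, of ?g] c by simp
  finally show "card D63 \<le> 63" .
qed

definition PQ :: "nat \<Rightarrow> nat \<Rightarrow> (nat \<times> nat) set" where
  "PQ Q T = {(x, y). 1 \<le> x \<and> x \<le> Q \<and> 1 \<le> y \<and> y \<le> Q \<and> T \<le> x + y}"

lemma card_PQ: assumes "3 \<le> T" shows "card (PQ Q T) \<le> Q^2 - 1" "finite (PQ Q T)"
proof -
  have sub: "PQ Q T \<subseteq> {1..Q} \<times> {1..Q} - {(1,1)}" unfolding PQ_def using assms by auto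
  show "finite (PQ Q T)" using sub by (rule finite_subset) auto
  have "card (PQ Q T) \<le> card ({1..Q} \<times> {1..Q} - {(1,1)})" using sub by (intro card_mono) auto
  also have "\<dots> \<le> Q^2 - 1"
  proof (cases "1 \<le> Q")
    case True
    then have "(1,1) \<in> {1..Q} \<times> {1..Q}" by simp
    then show ?thesis by (simp add: card_cartesian_product power2_eq_square)
  next
    case False then show ?thesis by simp
  qed
  finally show "card (PQ Q T) \<le> Q^2 - 1" .
qed

definition HH :: "nat \<Rightarrow> nat \<Rightarrow> nat" where "HH a b = (b - a - 1) div 2"

lemma Lo_eq: "{p. (a::nat) < p \<and> 2 * p < a + b} = {a<..<a + 1 + HH a b}"
  unfolding HH_def by auto

lemma card_Lo: "card {p. (a::nat) < p \<and> 2 * p < a + b} = HH a b"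
  unfolding Lo_eq by simp

lemma finite_Lo: "finite {p. (a::nat) < p \<and> 2 * p < a + b}"
  unfolding Lo_eq by simp

lemma restrict_sub_image:
  assumes "B \<subseteq> G"
  shows "(\<lambda>w. restrict w B) ` ((\<lambda>w. restrict w G) ` W) = (\<lambda>w. restrict w B) ` W"
proof -
  have e: "restrict (restrict w G) B = restrict w B" for w using assms by (simp add: Int_absorb1)
  have "(\<lambda>w. restrict w B) ` ((\<lambda>w. restrict w G) ` W) = (\<lambda>w. restrict (restrict w G) B) ` W"
    by (simp only: image_image)
  also have "\<dots> = (\<lambda>w. restrict w B) ` W" by (rule image_cong[OF refl]) (rule e)
  finally show ?thesis .
qed

lemma mid_card_le1: "card {p. (a::nat) < p \<and> p < b \<and> 2 * p = a + b} \<le> 1"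
proof -
  have "{p. a < p \<and> p < b \<and> 2 * p = a + b} \<subseteq> {(a + b) div 2}" by auto
  then have "card {p. a < p \<and> p < b \<and> 2 * p = a + b} \<le> card {(a + b) div 2}" by (intro card_mono) auto
  then show ?thesis by simp
qed

lemma mid_finite: "finite {p. (a::nat) < p \<and> p < b \<and> 2 * p = a + b}"
proof -
  have "{p. a < p \<and> p < b \<and> 2 * p = a + b} \<subseteq> {(a + b) div 2}" by auto
  then show ?thesis using finite_subset by blast
qed

lemma prod_mid_le:
  assumes "\<And>p. p \<in> {p. (a::nat) < p \<and> p < b \<and> 2 * p = a + b} \<Longrightarrow> g p \<le> c" "1 \<le> c"
  shows "(\<Prod>p\<in>{p. a < p \<and> p < b \<and> 2 * p = a + b}. g p) \<le> (c::nat)"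
proof (cases "{p. a < p \<and> p < b \<and> 2 * p = a + b} = {}")
  case True then show ?thesis using assms(2) by (simp only: prod.empty)
next
  case False
  then obtain p0 where p0: "p0 \<in> {p. a < p \<and> p < b \<and> 2 * p = a + b}" by blast
  then have "{p. a < p \<and> p < b \<and> 2 * p = a + b} = {p0}" by auto
  then show ?thesis using assms(1) p0 by simp
qed

lemma pair_region:
  fixes W :: "(nat \<Rightarrow> nat) set" and A :: "nat \<Rightarrow> (nat \<times> nat) set" and a b :: nat
  assumes pr: "\<And>w p. w \<in> W \<Longrightarrow> a < p \<Longrightarrow> 2 * p < a + b \<Longrightarrow> (w p, w (a + b - p)) \<in> A p"
    and finA: "\<And>p. finite (A p)"
    and mid: "\<And>w p. w \<in> W \<Longrightarrow> a < p \<Longrightarrow> p < b \<Longrightarrow> 2 * p = a + b \<Longrightarrow> w p \<in> A1"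
    and finA1: "finite A1" and c1: "1 \<le> card A1"
  shows "card ((\<lambda>w. restrict w {a<..<b}) ` W) \<le> card A1 * (\<Prod>p\<in>{p. a < p \<and> 2 * p < a + b}. card (A p))"
proof -
  let ?G = "{a<..<b}"
  let ?W = "(\<lambda>w. restrict w ?G) ` W"
  let ?Rl = "{p. a < p \<and> 2 * p < a + b}"
  let ?Rm = "{p. a < p \<and> p < b \<and> 2 * p = a + b}"
  let ?\<beta> = "\<lambda>p. {p, a + b - p}"
  have W': "?W \<subseteq> extensional ?G" by auto
  have fR: "finite (?Rl \<union> ?Rm)" using finite_Lo mid_finite by blast
  have cov: "?G \<subseteq> (\<Union>p\<in>?Rl \<union> ?Rm. ?\<beta> p)"
  proof
    fix x assume x: "x \<in> ?G"
    show "x \<in> (\<Union>p\<in>?Rl \<union> ?Rm. ?\<beta> p)"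
    proof (cases "2 * x < a + b")
      case True then show ?thesis using x by auto
    next
      case F: False
      show ?thesis
      proof (cases "2 * x = a + b")
        case True then show ?thesis using x by auto
      next
        case False
        then have "a + b - x \<in> ?Rl" "x \<in> ?\<beta> (a + b - x)" using x F by auto
        then show ?thesis by blast
      qed
    qed
  qed
  have "card ?W \<le> (\<Prod>p\<in>?Rl \<union> ?Rm. card ((\<lambda>w. restrict w (?\<beta> p)) ` ?W))"
    by (rule card_le_prod_reps[OF W' fR cov])
  also have "\<dots> = (\<Prod>p\<in>?Rl \<union> ?Rm. card ((\<lambda>w. restrict w (?\<beta> p)) ` W))"
  proof (rule prod.cong[OF refl])
    fix p assume "p \<in> ?Rl \<union> ?Rm"
    then have "?\<beta> p \<subseteq> ?G" by auto
    then show "card ((\<lambda>w. restrict w (?\<beta> p)) ` ?W) = card ((\<lambda>w. restrict w (?\<beta> p)) ` W)"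
      by (simp add: restrict_sub_image)
  qed
  also have "\<dots> = (\<Prod>p\<in>?Rl. card ((\<lambda>w. restrict w (?\<beta> p)) ` W)) * (\<Prod>p\<in>?Rm. card ((\<lambda>w. restrict w (?\<beta> p)) ` W))"
    by (rule prod.union_disjoint) (use finite_Lo mid_finite in auto)
  also have "\<dots> \<le> (\<Prod>p\<in>?Rl. card (A p)) * card A1"
  proof (rule mult_le_mono)
    show "(\<Prod>p\<in>?Rl. card ((\<lambda>w. restrict w (?\<beta> p)) ` W)) \<le> (\<Prod>p\<in>?Rl. card (A p))"
    proof (rule prod_mono)
      fix p assume "p \<in> ?Rl"
      then show "0 \<le> card ((\<lambda>w. restrict w (?\<beta> p)) ` W) \<and> card ((\<lambda>w. restrict w (?\<beta> p)) ` W) \<le> card (A p)"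
        using card_restrict_2[of W p "a + b - p" "A p"] pr finA by auto
    qed
    show "(\<Prod>p\<in>?Rm. card ((\<lambda>w. restrict w (?\<beta> p)) ` W)) \<le> card A1"
    proof (rule prod_mid_le[OF _ c1])
      fix p assume p: "p \<in> ?Rm"
      then have "?\<beta> p = {p}" by auto
      then show "card ((\<lambda>w. restrict w (?\<beta> p)) ` W) \<le> card A1"
        using card_restrict_1[of W p A1] mid p finA1 by auto
    qed
  qed
  finally show ?thesis by (simp add: mult.commute)
qed


lemma Lo_iff: "(a < p \<and> 2 * p < a + b) \<longleftrightarrow> (a < p \<and> p < a + 1 + HH a b)"
  using Lo_eq[of a b] by (auto simp: set_eq_iff)

lemma domino_region:
  fixes W :: "(nat \<Rightarrow> nat) set" and a b t :: nat
  assumes pr: "\<And>w p. w \<in> W \<Longrightarrow> a < p \<Longrightarrow> 2 * p < a + b \<Longrightarrow> (w p, w (a + b - p)) \<in> P8"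
    and mid: "\<And>w p. w \<in> W \<Longrightarrow> a < p \<Longrightarrow> p < b \<Longrightarrow> 2 * p = a + b \<Longrightarrow> w p \<in> {1,2,3}"
    and ch: "\<And>w p. w \<in> W \<Longrightarrow> a < p \<Longrightarrow> p + t < b \<Longrightarrow> w p = 1 \<Longrightarrow> w (p + t) \<noteq> 3"
    and t: "1 \<le> t"
  shows "card ((\<lambda>w. restrict w {a<..<b}) ` W)
    \<le> 3 * 63 ^ (t * (HH a b div (2 * t))) * 8 ^ (HH a b - 2 * t * (HH a b div (2 * t)))"
proof -
  define H where "H = HH a b"
  define J where "J = H div (2 * t)"
  let ?G = "{a<..<b}"
  let ?W = "(\<lambda>w. restrict w ?G) ` W"
  define Rd where "Rd = (\<lambda>(j, u). a + 1 + 2 * t * j + u) ` ({..<J} \<times> {..<t})"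
  define Rp where "Rp = {a + 1 + 2 * t * J..<a + 1 + H}"
  define Rm where "Rm = {p. a < p \<and> p < b \<and> 2 * p = a + b}"
  define \<beta> where "\<beta> p = (if p \<in> Rd then {p, p + t, a + b - p, a + b - (p + t)} else {p, a + b - p})" for p
  have tJ: "2 * t * J \<le> H" unfolding J_def by (metis div_mult_self1_is_m mult.commute times_div_less_eq_dividend zero_less_mult_iff)
  have LoH: "(a < p \<and> 2 * p < a + b) \<longleftrightarrow> (a < p \<and> p < a + 1 + H)" for p unfolding H_def by (rule Lo_iff)
  have Rd_mem: "p \<in> Rd \<longleftrightarrow> (\<exists>j u. j < J \<and> u < t \<and> p = a + 1 + 2 * t * j + u)" for p
  proof
    assume "p \<in> Rd" then show "\<exists>j u. j < J \<and> u < t \<and> p = a + 1 + 2 * t * j + u" unfolding Rd_def by auto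
  next
    assume "\<exists>j u. j < J \<and> u < t \<and> p = a + 1 + 2 * t * j + u"
    then obtain j u where "j < J" "u < t" "p = a + 1 + 2 * t * j + u" by blast
    then show "p \<in> Rd" unfolding Rd_def by (intro image_eqI[where x = "(j, u)"]) auto
  qed
  have Rd_prop: "a < p \<and> p + t < a + 1 + 2 * t * J" if "p \<in> Rd" for p
  proof -
    have "\<exists>j u. j < J \<and> u < t \<and> p = a + 1 + 2 * t * j + u" using that unfolding Rd_mem .
    then obtain j u where ju: "j < J" "u < t" "p = a + 1 + 2 * t * j + u" by blast
    have "2 * t * j + u + t < 2 * t * (j + 1)" using ju(2) by simp
    also have "\<dots> \<le> 2 * t * J" using ju(1) by (intro mult_le_mono2) simp
    finally show ?thesis using ju(3) by simp
  qed
  have W': "?W \<subseteq> extensional ?G" by auto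
  have fR: "finite (Rd \<union> Rp \<union> Rm)" unfolding Rd_def Rp_def Rm_def using mid_finite by auto
  have cov: "?G \<subseteq> (\<Union>p\<in>Rd \<union> Rp \<union> Rm. \<beta> p)"
  proof
    fix x assume x: "x \<in> ?G"
    define y where "y = (if 2 * x \<le> a + b then x else a + b - x)"
    have xy: "x = y \<or> x = a + b - y" "a < y" "2 * y \<le> a + b" using x unfolding y_def by auto
    show "x \<in> (\<Union>p\<in>Rd \<union> Rp \<union> Rm. \<beta> p)"
    proof (cases "2 * y = a + b")
      case True
      then have "y \<in> Rm" "x = y" using xy x unfolding Rm_def by auto
      moreover have "y \<notin> Rd" using Rd_prop[of y] LoH[of y] True tJ by auto
      ultimately show ?thesis unfolding \<beta>_def by auto
    next
      case False
      then have ylo: "a < y" "y < a + 1 + H" using xy LoH[of y] by auto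
      define i where "i = y - a - 1"
      have yi: "y = a + 1 + i" "i < H" using ylo unfolding i_def by auto
      show ?thesis
      proof (cases "2 * t * J \<le> i")
        case True
        then have "y \<in> Rp" unfolding Rp_def using yi by auto
        moreover have "y \<notin> Rd" using Rd_prop[of y] yi True by auto
        ultimately show ?thesis using xy(1) unfolding \<beta>_def by auto
      next
        case False
        define j where "j = i div (2 * t)"
        define u where "u = i mod (2 * t)"
        have iju: "i = 2 * t * j + u" "u < 2 * t" unfolding j_def u_def using t by auto
        have jJ: "j < J"
        proof (rule ccontr)
          assume "\<not> j < J"
          then have "2 * t * J \<le> 2 * t * j" by (intro mult_le_mono2) simp
          then show False using False iju by linarith
        qed
        show ?thesis
        proof (cases "u < t")
          case True
          then have "y \<in> Rd" unfolding Rd_mem using jJ yi iju True by (intro exI[of _ j] exI[of _ u]) simp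
          then show ?thesis using xy(1) unfolding \<beta>_def by auto
        next
          case uF: False
          define z where "z = a + 1 + 2 * t * j + (u - t)"
          have zRd: "z \<in> Rd" unfolding Rd_mem z_def using jJ iju uF by (intro exI[of _ j] exI[of _ "u - t"]) auto
          have "z + t = y" unfolding z_def using yi iju uF by simp
          then have "x \<in> \<beta> z" using xy(1) zRd unfolding \<beta>_def by auto
          then show ?thesis using zRd by blast
        qed
      qed
    qed
  qed
  have dRdRp: "Rd \<inter> Rp = {}"
  proof -
    have False if "p \<in> Rd" "p \<in> Rp" for p
    proof -
      have "p + t < a + 1 + 2 * t * J" using Rd_prop[OF that(1)] by simp
      moreover have "a + 1 + 2 * t * J \<le> p" using that(2) unfolding Rp_def by simp
      ultimately show False by simp
    qed
    then show ?thesis by blast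
  qed
  have dRdRm: "Rd \<inter> Rm = {}"
  proof -
    have False if "p \<in> Rd" "p \<in> Rm" for p
    proof -
      have "a < p" "p + t < a + 1 + 2 * t * J" using Rd_prop[OF that(1)] by auto
      then have "p < a + 1 + H" using tJ by linarith
      then have "2 * p < a + b" using LoH[of p] \<open>a < p\<close> by blast
      then show False using that(2) unfolding Rm_def by simp
    qed
    then show ?thesis by blast
  qed
  have dRpRm: "Rp \<inter> Rm = {}"
  proof -
    have False if "p \<in> Rp" "p \<in> Rm" for p
    proof -
      have "a < p" "p < a + 1 + H" using that(1) unfolding Rp_def by auto
      then have "2 * p < a + b" using LoH[of p] by blast
      then show False using that(2) unfolding Rm_def by simp
    qed
    then show ?thesis by blast
  qed
  have "card ?W \<le> (\<Prod>p\<in>Rd \<union> Rp \<union> Rm. card ((\<lambda>w. restrict w (\<beta> p)) ` ?W))"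
    by (rule card_le_prod_reps[OF W' fR cov])
  also have "\<dots> = (\<Prod>p\<in>Rd \<union> Rp \<union> Rm. card ((\<lambda>w. restrict w (\<beta> p)) ` W))"
  proof (rule prod.cong[OF refl])
    fix p assume p: "p \<in> Rd \<union> Rp \<union> Rm"
    have "\<beta> p \<subseteq> ?G"
    proof (cases "p \<in> Rd")
      case True
      then have "a < p" "p + t < a + 1 + H" using Rd_prop[of p] tJ by auto
      moreover have "a + 1 + H \<le> b" "2 * (p + t) < a + b" using LoH[of "p + t"] calculation unfolding H_def HH_def by auto
      ultimately show ?thesis using True unfolding \<beta>_def by auto
    next
      case False
      then have "p \<in> Rp \<union> Rm" using p by auto
      then have "a < p" "2 * p \<le> a + b" using LoH[of p] unfolding Rp_def Rm_def by auto
      moreover have "p < b" using calculation by auto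
      ultimately show ?thesis using False unfolding \<beta>_def by auto
    qed
    then show "card ((\<lambda>w. restrict w (\<beta> p)) ` ?W) = card ((\<lambda>w. restrict w (\<beta> p)) ` W)"
      by (simp add: restrict_sub_image)
  qed
  also have "\<dots> = (\<Prod>p\<in>Rd. card ((\<lambda>w. restrict w (\<beta> p)) ` W)) * (\<Prod>p\<in>Rp. card ((\<lambda>w. restrict w (\<beta> p)) ` W))
      * (\<Prod>p\<in>Rm. card ((\<lambda>w. restrict w (\<beta> p)) ` W))"
    using fR dRdRp dRdRm dRpRm by (simp add: prod.union_disjoint Int_Un_distrib2)
  also have "\<dots> \<le> 63 ^ card Rd * 8 ^ card Rp * 3"
  proof (intro mult_le_mono)
    show "(\<Prod>p\<in>Rd. card ((\<lambda>w. restrict w (\<beta> p)) ` W)) \<le> 63 ^ card Rd"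
    proof -
      have "(\<Prod>p\<in>Rd. card ((\<lambda>w. restrict w (\<beta> p)) ` W)) \<le> (\<Prod>p\<in>Rd. 63)"
      proof (rule prod_mono)
        fix p assume p: "p \<in> Rd"
        have pp: "a < p" "p + t < a + 1 + H" using Rd_prop[OF p] tJ by auto
        have lo1: "2 * p < a + b" and lo2: "2 * (p + t) < a + b" using LoH[of p] LoH[of "p + t"] pp by auto
        have pb: "p + t < b" using lo2 pp(1) by (simp add: algebra_simps)
        have "card ((\<lambda>w. restrict w {p, p + t, a + b - p, a + b - (p + t)}) ` W) \<le> card D63"
        proof (rule card_restrict_4)
          fix w assume w: "w \<in> W"
          show "(w p, w (p + t), w (a + b - p), w (a + b - (p + t))) \<in> D63"
            unfolding D63_def using pr[OF w pp(1) lo1] pr[OF w _ lo2] ch[OF w pp(1) pb] pp by auto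
        qed (rule card_D63(2))
        then show "0 \<le> card ((\<lambda>w. restrict w (\<beta> p)) ` W) \<and> card ((\<lambda>w. restrict w (\<beta> p)) ` W) \<le> 63"
          using card_D63(1) p unfolding \<beta>_def by simp
      qed
      then show ?thesis by simp
    qed
    show "(\<Prod>p\<in>Rp. card ((\<lambda>w. restrict w (\<beta> p)) ` W)) \<le> 8 ^ card Rp"
    proof -
      have "(\<Prod>p\<in>Rp. card ((\<lambda>w. restrict w (\<beta> p)) ` W)) \<le> (\<Prod>p\<in>Rp. 8)"
      proof (rule prod_mono)
        fix p assume p: "p \<in> Rp"
        then have pnd: "p \<notin> Rd" using dRdRp by auto
        have pp: "a < p" "2 * p < a + b" using p LoH[of p] unfolding Rp_def by auto
        have "card ((\<lambda>w. restrict w {p, a + b - p}) ` W) \<le> card P8"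
          using card_restrict_2[of W p "a + b - p" P8] pr pp finite_P8 by auto
        then show "0 \<le> card ((\<lambda>w. restrict w (\<beta> p)) ` W) \<and> card ((\<lambda>w. restrict w (\<beta> p)) ` W) \<le> 8"
          using card_P8 pnd unfolding \<beta>_def by simp
      qed
      then show ?thesis by simp
    qed
    show "(\<Prod>p\<in>Rm. card ((\<lambda>w. restrict w (\<beta> p)) ` W)) \<le> 3"
      unfolding Rm_def
    proof (rule prod_mid_le)
      fix p assume p: "p \<in> {p. a < p \<and> p < b \<and> 2 * p = a + b}"
      then have pnd: "p \<notin> Rd" using dRdRm unfolding Rm_def by auto
      have "\<beta> p = {p}" using p pnd unfolding \<beta>_def by auto
      moreover have "card ((\<lambda>w. restrict w {p}) ` W) \<le> card {1::nat, 2, 3}"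
        using card_restrict_1[of W p "{1,2,3}"] mid p by auto
      ultimately show "card ((\<lambda>w. restrict w (\<beta> p)) ` W) \<le> 3" by simp
    qed simp
  qed
  also have "card Rd = t * J"
  proof -
    have "inj_on (\<lambda>(j, u). a + 1 + 2 * t * j + u) ({..<J} \<times> {..<t})"
    proof (rule inj_onI, clarsimp)
      fix j u j' u' assume h: "j < J" "u < t" "j' < J" "u' < t" "2 * t * j + u = 2 * t * j' + u'"
      have "(2 * t * j + u) div (2 * t) = j" using h(2) by simp
      moreover have "(2 * t * j' + u') div (2 * t) = j'" using h(4) by simp
      ultimately have "j = j'" using h(5) by simp
      then show "j = j' \<and> u = u'" using h(5) by simp
    qed
    then have "card Rd = card ({..<J} \<times> {..<t})" unfolding Rd_def by (rule card_image)
    then show ?thesis by (simp add: card_cartesian_product)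
  qed
  also have "card Rp = H - 2 * t * J" unfolding Rp_def using tJ by simp
  finally show ?thesis unfolding H_def J_def by (simp only: mult_ac)
qed


lemma hb_region:
  fixes W :: "(nat \<Rightarrow> nat) set" and a b h :: nat
  assumes pr: "\<And>w p. w \<in> W \<Longrightarrow> a < p \<Longrightarrow> 2 * p < a + b \<Longrightarrow> (w p, w (a + b - p)) \<in> P8"
    and mid: "\<And>w p. w \<in> W \<Longrightarrow> a < p \<Longrightarrow> p < b \<Longrightarrow> 2 * p = a + b \<Longrightarrow> w p \<in> {1,2,3}"
    and lowh: "\<And>w p. w \<in> W \<Longrightarrow> a < p \<Longrightarrow> p \<le> a + h \<Longrightarrow> 2 * p < a + b \<Longrightarrow> 2 \<le> w p"
  shows "card ((\<lambda>w. restrict w {a<..<b}) ` W) \<le> 3 * 6 ^ min h (HH a b) * 8 ^ (HH a b - min h (HH a b))"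
proof -
  let ?A = "\<lambda>p. if p \<le> a + h then P6 else P8"
  let ?Lo = "{p. a < p \<and> 2 * p < a + b}"
  have "card ((\<lambda>w. restrict w {a<..<b}) ` W) \<le> card {1::nat,2,3} * (\<Prod>p\<in>?Lo. card (?A p))"
  proof (rule pair_region)
    fix w p assume w: "w \<in> W" and p: "a < p" "2 * p < a + b"
    show "(w p, w (a + b - p)) \<in> ?A p"
    proof (cases "p \<le> a + h")
      case True
      then have "2 \<le> w p" using lowh[OF w p(1) True p(2)] by simp
      then show ?thesis using True pr[OF w p] unfolding P8_def P6_def by auto
    next
      case False then show ?thesis using pr[OF w p] by simp
    qed
  next
    show "\<And>p. finite (?A p)" using finite_P6 finite_P8 by simp
  qed (use mid in auto)
  also have "(\<Prod>p\<in>?Lo. card (?A p)) = (\<Prod>p\<in>?Lo. if p \<le> a + h then 6 else 8)"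
    by (rule prod.cong) (auto simp: card_P6 card_P8)
  also have "\<dots> = (\<Prod>p\<in>?Lo \<inter> {p. p \<le> a + h}. 6) * (\<Prod>p\<in>?Lo \<inter> - {p. p \<le> a + h}. 8)"
    by (rule prod.If_cases[OF finite_Lo])
  also have "\<dots> = 6 ^ min h (HH a b) * 8 ^ (HH a b - min h (HH a b))"
  proof -
    have e1: "?Lo \<inter> {p. p \<le> a + h} = {a<..a + min h (HH a b)}"
      unfolding Lo_eq by auto
    have e2: "?Lo \<inter> - {p. p \<le> a + h} = {a + min h (HH a b)<..<a + 1 + HH a b}"
      unfolding Lo_eq by auto
    show ?thesis unfolding e1 e2 by simp
  qed
  finally have X: "card ((\<lambda>w. restrict w {a<..<b}) ` W) \<le> card {1::nat,2,3} * (6 ^ min h (HH a b) * 8 ^ (HH a b - min h (HH a b)))" .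
  have c3: "card {1::nat,2,3} = 3" by simp
  show ?thesis using X unfolding c3 by (simp only: mult.assoc)
qed

lemma PQ_region:
  fixes W :: "(nat \<Rightarrow> nat) set" and a b Q T :: nat
  assumes pr: "\<And>w p. w \<in> W \<Longrightarrow> a < p \<Longrightarrow> 2 * p < a + b \<Longrightarrow> (w p, w (a + b - p)) \<in> PQ Q T"
    and mid: "\<And>w p. w \<in> W \<Longrightarrow> a < p \<Longrightarrow> p < b \<Longrightarrow> 2 * p = a + b \<Longrightarrow> w p \<in> {1..Q}"
    and T: "3 \<le> T" and Q: "1 \<le> Q"
  shows "card ((\<lambda>w. restrict w {a<..<b}) ` W) \<le> Q * (Q^2 - 1) ^ HH a b"
proof -
  have "card ((\<lambda>w. restrict w {a<..<b}) ` W) \<le> card {1..Q} * (\<Prod>p\<in>{p. a < p \<and> 2 * p < a + b}. card (PQ Q T))"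
    by (rule pair_region) (use pr mid card_PQ(2)[OF T] Q in auto)
  also have "\<dots> \<le> Q * (\<Prod>p\<in>{p. a < p \<and> 2 * p < a + b}. Q^2 - 1)"
    by (intro mult_le_mono prod_mono) (use card_PQ(1)[OF T] in auto)
  also have "(\<Prod>p\<in>{p. a < p \<and> 2 * p < a + b}. Q^2 - 1) = (Q^2 - 1) ^ HH a b"
    by (simp add: card_Lo)
  finally show ?thesis .
qed

lemma KW_D:
  assumes "v \<in> KW f m"
  shows "v \<in> extensional {1..<m}"
    "\<And>r. 1 \<le> r \<Longrightarrow> r < m \<Longrightarrow> 1 \<le> v r"
    "\<And>r. 1 \<le> r \<Longrightarrow> r < m \<Longrightarrow> v r \<le> f div m + 1"
    "\<And>r. f mod m < r \<Longrightarrow> r < m \<Longrightarrow> v r \<le> f div m"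
    "\<And>r r'. 1 \<le> r \<Longrightarrow> 1 \<le> r' \<Longrightarrow> r + r' < m \<Longrightarrow> v (r + r') \<le> v r + v r'"
    "\<And>r. 1 \<le> r \<Longrightarrow> r < f mod m \<Longrightarrow> f div m + 1 \<le> v r + v (f mod m - r)"
    "\<And>r. f mod m < r \<Longrightarrow> r < m \<Longrightarrow> f div m \<le> v r + v (m + f mod m - r)"
  using assms unfolding KW_def KP_def by auto

lemma U_split: "1 \<le> s \<Longrightarrow> s < m \<Longrightarrow> {1..<m} = {0<..<s} \<union> ({s} \<union> {s<..<(m::nat)})"
  by auto

lemma card_split_sub:
  fixes W :: "('a \<Rightarrow> 'b) set"
  assumes W: "W \<subseteq> extensional (A \<union> (B \<union> C))"
  shows "card W \<le> card ((\<lambda>w. restrict w A) ` W) * (card ((\<lambda>w. restrict w B) ` W) * card ((\<lambda>w. restrict w C) ` W))"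
proof -
  have 1: "card W \<le> card ((\<lambda>w. restrict w A) ` W) * card ((\<lambda>w. restrict w (B \<union> C)) ` W)"
    by (rule card_split2[OF W])
  have 2: "card ((\<lambda>w. restrict w (B \<union> C)) ` W)
      \<le> card ((\<lambda>w. restrict w B) ` ((\<lambda>w. restrict w (B \<union> C)) ` W)) * card ((\<lambda>w. restrict w C) ` ((\<lambda>w. restrict w (B \<union> C)) ` W))"
    by (rule card_split2) auto
  have 3: "(\<lambda>w. restrict w B) ` ((\<lambda>w. restrict w (B \<union> C)) ` W) = (\<lambda>w. restrict w B) ` W"
    by (rule restrict_sub_image) auto
  have 4: "(\<lambda>w. restrict w C) ` ((\<lambda>w. restrict w (B \<union> C)) ` W) = (\<lambda>w. restrict w C) ` W"
    by (rule restrict_sub_image) auto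
  have "card ((\<lambda>w. restrict w (B \<union> C)) ` W) \<le> card ((\<lambda>w. restrict w B) ` W) * card ((\<lambda>w. restrict w C) ` W)"
    using 2 unfolding 3 4 .
  then show ?thesis using 1 by (meson mult_le_mono2 order_trans)
qed

lemma KW_q4:
  assumes m2: "2 \<le> m" and q4: "4 \<le> f div m" and s0: "0 < f mod m"
  shows "card (KW f m) \<le> (f div m + 1) * ((f div m + 1)^2 - 1) ^ HH 0 (f mod m) * ((f div m + 1)
      * (f div m * ((f div m)^2 - 1) ^ HH (f mod m) m))"
proof -
  define q where "q = f div m"
  define s where "s = f mod m"
  have sm: "s < m" unfolding s_def using m2 by simp
  have s1: "1 \<le> s" using s0 unfolding s_def by simp
  have W: "KW f m \<subseteq> extensional ({0<..<s} \<union> ({s} \<union> {s<..<m}))"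
  proof
    fix v assume "v \<in> KW f m"
    then have "v \<in> extensional {1..<m}" by (rule KW_D(1))
    then show "v \<in> extensional ({0<..<s} \<union> ({s} \<union> {s<..<m}))" using U_split[OF s1 sm] by simp
  qed
  have "card (KW f m) \<le> card ((\<lambda>w. restrict w {0<..<s}) ` KW f m) * (card ((\<lambda>w. restrict w {s}) ` KW f m)
      * card ((\<lambda>w. restrict w {s<..<m}) ` KW f m))"
    by (rule card_split_sub[OF W])
  also have "\<dots> \<le> ((q + 1) * ((q+1)^2 - 1) ^ HH 0 s) * ((q + 1) * (q * (q^2 - 1) ^ HH s m))"
  proof (intro mult_le_mono)
    show "card ((\<lambda>w. restrict w {0<..<s}) ` KW f m) \<le> (q + 1) * ((q+1)^2 - 1) ^ HH 0 s"
    proof (rule PQ_region[where T = "q + 1"])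
      fix w p assume w: "w \<in> KW f m" and p: "0 < p" "2 * p < 0 + s"
      have pm: "p < m" "s - p < m" "1 \<le> s - p" "p < s" using p sm by auto
      show "(w p, w (0 + s - p)) \<in> PQ (q + 1) (q + 1)"
        unfolding PQ_def using KW_D(2,3)[OF w] KW_D(6)[OF w, of p] p pm unfolding q_def s_def by auto
    next
      fix w p assume w: "w \<in> KW f m" and p: "0 < p" "p < s" "2 * p = 0 + s"
      then show "w p \<in> {1..q + 1}" using KW_D(2,3)[OF w, of p] sm unfolding q_def by auto
    qed (use q4 in \<open>auto simp: q_def\<close>)
    show "card ((\<lambda>w. restrict w {s}) ` KW f m) \<le> q + 1"
      using card_restrict_1[of "KW f m" s "{1..q+1}"] KW_D(2,3) s1 sm unfolding q_def by auto
    show "card ((\<lambda>w. restrict w {s<..<m}) ` KW f m) \<le> q * (q^2 - 1) ^ HH s m"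
    proof (rule PQ_region[where T = q])
      fix w p assume w: "w \<in> KW f m" and p: "s < p" "2 * p < s + m"
      have pm: "p < m" "s + m - p < m" "s < s + m - p" "s + m - p = m + f mod m - p" using p sm unfolding s_def by auto
      show "(w p, w (s + m - p)) \<in> PQ q q"
        unfolding PQ_def using KW_D(2,4)[OF w, of p] KW_D(2,4)[OF w, of "s + m - p"] KW_D(7)[OF w, of p] p pm s1
        unfolding q_def s_def by auto
    next
      fix w p assume w: "w \<in> KW f m" and p: "s < p" "p < m" "2 * p = s + m"
      then show "w p \<in> {1..q}" using KW_D(2,4)[OF w, of p] s1 unfolding q_def s_def by auto
    qed (use q4 in \<open>auto simp: q_def\<close>)
  qed
  finally show ?thesis unfolding q_def s_def by simp
qed


definition Wt :: "nat \<Rightarrow> nat \<Rightarrow> nat \<Rightarrow> (nat \<Rightarrow> nat) set" where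
  "Wt f m t = {v \<in> KW f m. (\<forall>r. 1 \<le> r \<longrightarrow> r < t \<longrightarrow> 2 \<le> v r) \<and> (t < m \<longrightarrow> v t = 1)}"

lemma KW_cover: assumes "1 \<le> m" shows "KW f m \<subseteq> (\<Union>t\<in>{1..m}. Wt f m t)"
proof
  fix v assume v: "v \<in> KW f m"
  show "v \<in> (\<Union>t\<in>{1..m}. Wt f m t)"
  proof (cases "\<exists>r. 1 \<le> r \<and> r < m \<and> v r = 1")
    case True
    define t where "t = (LEAST r. 1 \<le> r \<and> r < m \<and> v r = 1)"
    have t: "1 \<le> t \<and> t < m \<and> v t = 1" unfolding t_def using True by (rule LeastI_ex)
    have "2 \<le> v r" if "1 \<le> r" "r < t" for r
    proof -
      have "\<not> (1 \<le> r \<and> r < m \<and> v r = 1)" using not_less_Least[of r "\<lambda>r. 1 \<le> r \<and> r < m \<and> v r = 1"] that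
        unfolding t_def by blast
      then have "v r \<noteq> 1" using that t by auto
      moreover have "1 \<le> v r" using KW_D(2)[OF v] that t by auto
      ultimately show ?thesis by simp
    qed
    then have "v \<in> Wt f m t" unfolding Wt_def using v t by auto
    then show ?thesis using t by auto
  next
    case False
    have "2 \<le> v r" if "1 \<le> r" "r < m" for r
    proof -
      have "v r \<noteq> 1" using False that by auto
      moreover have "1 \<le> v r" using KW_D(2)[OF v] that by auto
      ultimately show ?thesis by simp
    qed
    then have "v \<in> Wt f m m" unfolding Wt_def using v by auto
    then show ?thesis using assms by auto
  qed
qed

lemma finite_Wt: "finite (Wt f m t)"
  by (rule finite_subset[OF _ finite_KW[of f m]]) (auto simp: Wt_def)

lemma card_restrict_KW_sum:
  assumes "1 \<le> m"
  shows "card ((\<lambda>w. restrict w G) ` KW f m) \<le> (\<Sum>t\<in>{1..m}. card ((\<lambda>w. restrict w G) ` Wt f m t))"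
proof -
  have "(\<lambda>w. restrict w G) ` KW f m \<subseteq> (\<Union>t\<in>{1..m}. (\<lambda>w. restrict w G) ` Wt f m t)"
    using KW_cover[OF assms] by blast
  then have "card ((\<lambda>w. restrict w G) ` KW f m) \<le> card (\<Union>t\<in>{1..m}. (\<lambda>w. restrict w G) ` Wt f m t)"
    by (intro card_mono) (auto intro: finite_Wt)
  also have "\<dots> \<le> (\<Sum>t\<in>{1..m}. card ((\<lambda>w. restrict w G) ` Wt f m t))" by (rule card_UN_le) simp
  finally show ?thesis .
qed

lemma Wt_D: "v \<in> Wt f m t \<Longrightarrow> v \<in> KW f m" "v \<in> Wt f m t \<Longrightarrow> 1 \<le> r \<Longrightarrow> r < t \<Longrightarrow> 2 \<le> v r"
  "v \<in> Wt f m t \<Longrightarrow> t < m \<Longrightarrow> v t = 1"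
  unfolding Wt_def by auto

lemma KW_q3:
  assumes m2: "2 \<le> m" and q3: "f div m = 3" and s0: "0 < f mod m"
  shows "card (KW f m) \<le> 4 * 15 ^ HH 0 (f mod m) * (4 * (\<Sum>t\<in>{1..m}. card ((\<lambda>w. restrict w {f mod m<..<m}) ` Wt f m t)))"
proof -
  define s where "s = f mod m"
  have sm: "s < m" unfolding s_def using m2 by simp
  have s1: "1 \<le> s" using s0 unfolding s_def by simp
  have W: "KW f m \<subseteq> extensional ({0<..<s} \<union> ({s} \<union> {s<..<m}))"
  proof
    fix v assume "v \<in> KW f m"
    then have "v \<in> extensional {1..<m}" by (rule KW_D(1))
    then show "v \<in> extensional ({0<..<s} \<union> ({s} \<union> {s<..<m}))" using U_split[OF s1 sm] by simp
  qed
  have "card (KW f m) \<le> card ((\<lambda>w. restrict w {0<..<s}) ` KW f m) * (card ((\<lambda>w. restrict w {s}) ` KW f m)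
      * card ((\<lambda>w. restrict w {s<..<m}) ` KW f m))"
    by (rule card_split_sub[OF W])
  also have "\<dots> \<le> (4 * (4^2 - 1) ^ HH 0 s) * (4 * (\<Sum>t\<in>{1..m}. card ((\<lambda>w. restrict w {s<..<m}) ` Wt f m t)))"
  proof (intro mult_le_mono)
    show "card ((\<lambda>w. restrict w {0<..<s}) ` KW f m) \<le> 4 * (4^2 - 1) ^ HH 0 s"
    proof (rule PQ_region[where T = 4])
      fix w p assume w: "w \<in> KW f m" and p: "0 < p" "2 * p < 0 + s"
      have pm: "p < m" "s - p < m" "1 \<le> s - p" "p < s" using p sm by auto
      show "(w p, w (0 + s - p)) \<in> PQ 4 4"
        unfolding PQ_def using KW_D(2,3)[OF w] KW_D(6)[OF w, of p] p pm q3 unfolding s_def by auto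
    next
      fix w p assume w: "w \<in> KW f m" and p: "0 < p" "p < s" "2 * p = 0 + s"
      then show "w p \<in> {1..4}" using KW_D(2,3)[OF w, of p] sm q3 by auto
    qed auto
    have "w s \<in> {1..4}" if "w \<in> KW f m" for w using KW_D(2,3)[OF that, of s] s1 sm q3 by auto
    then show "card ((\<lambda>w. restrict w {s}) ` KW f m) \<le> 4"
      using card_restrict_1[of "KW f m" s "{1..4}"] by auto
    show "card ((\<lambda>w. restrict w {s<..<m}) ` KW f m) \<le> (\<Sum>t\<in>{1..m}. card ((\<lambda>w. restrict w {s<..<m}) ` Wt f m t))"
      using card_restrict_KW_sum m2 by simp
  qed
  finally show ?thesis unfolding s_def by simp
qed

lemma Wt_q3_domino:
  assumes m2: "2 \<le> m" and q3: "f div m = 3" and s0: "0 < f mod m" and t: "1 \<le> t" "t < m"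
  shows "card ((\<lambda>w. restrict w {f mod m<..<m}) ` Wt f m t)
    \<le> 3 * 63 ^ (t * (HH (f mod m) m div (2 * t))) * 8 ^ (HH (f mod m) m - 2 * t * (HH (f mod m) m div (2 * t)))"
proof (rule domino_region)
  fix w p assume w: "w \<in> Wt f m t" and p: "f mod m < p" "2 * p < f mod m + m"
  have wk: "w \<in> KW f m" using Wt_D(1)[OF w] .
  have pm: "p < m" "f mod m + m - p < m" "f mod m < f mod m + m - p" "f mod m + m - p = m + f mod m - p" using p by auto
  show "(w p, w (f mod m + m - p)) \<in> P8"
    unfolding P8_def using KW_D(2,4)[OF wk, of p] KW_D(2,4)[OF wk, of "f mod m + m - p"] KW_D(7)[OF wk, of p] p pm q3 s0
    by auto
next
  fix w p assume w: "w \<in> Wt f m t" and p: "f mod m < p" "p < m" "2 * p = f mod m + m"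
  have wk: "w \<in> KW f m" using Wt_D(1)[OF w] .
  show "w p \<in> {1,2,3}" using KW_D(2,4)[OF wk, of p] p q3 s0 by auto
next
  fix w p assume w: "w \<in> Wt f m t" and p: "f mod m < p" "p + t < m" "w p = 1"
  have wk: "w \<in> KW f m" using Wt_D(1)[OF w] .
  have "w (p + t) \<le> w p + w t" using KW_D(5)[OF wk, of p t] p t s0 by auto
  then show "w (p + t) \<noteq> 3" using Wt_D(3)[OF w t(2)] p by simp
qed (use t in simp)

lemma Wt_q3_hb:
  assumes m2: "2 \<le> m" and q3: "f div m = 3" and s0: "0 < f mod m"
  shows "card ((\<lambda>w. restrict w {f mod m<..<m}) ` Wt f m t)
    \<le> 3 * 6 ^ min (t - f mod m - 1) (HH (f mod m) m) * 8 ^ (HH (f mod m) m - min (t - f mod m - 1) (HH (f mod m) m))"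
proof (rule hb_region)
  fix w p assume w: "w \<in> Wt f m t" and p: "f mod m < p" "2 * p < f mod m + m"
  have wk: "w \<in> KW f m" using Wt_D(1)[OF w] .
  have pm: "p < m" "f mod m + m - p < m" "f mod m < f mod m + m - p" "f mod m + m - p = m + f mod m - p" using p by auto
  show "(w p, w (f mod m + m - p)) \<in> P8"
    unfolding P8_def using KW_D(2,4)[OF wk, of p] KW_D(2,4)[OF wk, of "f mod m + m - p"] KW_D(7)[OF wk, of p] p pm q3 s0
    by auto
next
  fix w p assume w: "w \<in> Wt f m t" and p: "f mod m < p" "p < m" "2 * p = f mod m + m"
  have wk: "w \<in> KW f m" using Wt_D(1)[OF w] .
  show "w p \<in> {1,2,3}" using KW_D(2,4)[OF wk, of p] p q3 s0 by auto
next
  fix w p assume w: "w \<in> Wt f m t" and p: "f mod m < p" "p \<le> f mod m + (t - f mod m - 1)" "2 * p < f mod m + m"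
  then have "p < t" by linarith
  then show "2 \<le> w p" using Wt_D(2)[OF w, of p] p(1) by simp
qed


lemma q2_facts: assumes "2 \<le> (m::nat)" "f = 3 * m - 1" shows "f div m = 2" "f mod m = m - 1"
proof -
  show d: "f div m = 2" by (rule div_nat_eqI) (use assms in auto)
  have "f = m * (f div m) + f mod m" by simp
  then show "f mod m = m - 1" unfolding d using assms by simp
qed

lemma KW_q2:
  assumes m2: "2 \<le> m" and f: "f = 3 * m - 1"
  shows "card (KW f m) \<le> 3 * (\<Sum>t\<in>{1..m}. card ((\<lambda>w. restrict w {0<..<m - 1}) ` Wt f m t))"
proof -
  note qf = q2_facts[OF m2 f]
  have W: "KW f m \<subseteq> extensional ({m - 1} \<union> {0<..<m - 1})"
  proof
    fix v assume "v \<in> KW f m"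
    then have "v \<in> extensional {1..<m}" by (rule KW_D(1))
    moreover have "{1..<m} = {m - 1} \<union> {0<..<m - 1}" using m2 by auto
    ultimately show "v \<in> extensional ({m - 1} \<union> {0<..<m - 1})" by simp
  qed
  have "card (KW f m) \<le> card ((\<lambda>w. restrict w {m - 1}) ` KW f m) * card ((\<lambda>w. restrict w {0<..<m - 1}) ` KW f m)"
    by (rule card_split2[OF W])
  also have "\<dots> \<le> 3 * (\<Sum>t\<in>{1..m}. card ((\<lambda>w. restrict w {0<..<m - 1}) ` Wt f m t))"
  proof (intro mult_le_mono)
    have "w (m - 1) \<in> {1..3}" if "w \<in> KW f m" for w using KW_D(2,3)[OF that, of "m - 1"] m2 qf by auto
    then show "card ((\<lambda>w. restrict w {m - 1}) ` KW f m) \<le> 3"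
      using card_restrict_1[of "KW f m" "m - 1" "{1..3}"] by auto
    show "card ((\<lambda>w. restrict w {0<..<m - 1}) ` KW f m) \<le> (\<Sum>t\<in>{1..m}. card ((\<lambda>w. restrict w {0<..<m - 1}) ` Wt f m t))"
      using card_restrict_KW_sum m2 by simp
  qed
  finally show ?thesis .
qed

lemma Wt_q2_domino:
  assumes m2: "2 \<le> m" and f: "f = 3 * m - 1" and t: "1 \<le> t" "t < m"
  shows "card ((\<lambda>w. restrict w {0<..<m - 1}) ` Wt f m t)
    \<le> 3 * 63 ^ (t * (HH 0 (m - 1) div (2 * t))) * 8 ^ (HH 0 (m - 1) - 2 * t * (HH 0 (m - 1) div (2 * t)))"
proof (rule domino_region)
  note qf = q2_facts[OF m2 f]
  fix w p assume w: "w \<in> Wt f m t" and p: "0 < p" "2 * p < 0 + (m - 1)"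
  have wk: "w \<in> KW f m" using Wt_D(1)[OF w] .
  have pm: "p < m" "m - 1 - p < m" "1 \<le> m - 1 - p" "p < m - 1" using p by auto
  show "(w p, w (0 + (m - 1) - p)) \<in> P8"
    unfolding P8_def using KW_D(2,3)[OF wk, of p] KW_D(2,3)[OF wk, of "m - 1 - p"] KW_D(6)[OF wk, of p] p pm qf
    by auto
next
  note qf = q2_facts[OF m2 f]
  fix w p assume w: "w \<in> Wt f m t" and p: "0 < p" "p < m - 1" "2 * p = 0 + (m - 1)"
  have wk: "w \<in> KW f m" using Wt_D(1)[OF w] .
  have "p < m" "1 \<le> p" using p by auto
  then show "w p \<in> {1,2,3}" using KW_D(2,3)[OF wk, of p] qf by auto
next
  fix w p assume w: "w \<in> Wt f m t" and p: "0 < p" "p + t < m - 1" "w p = 1"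
  have wk: "w \<in> KW f m" using Wt_D(1)[OF w] .
  have "w (p + t) \<le> w p + w t" using KW_D(5)[OF wk, of p t] p t by auto
  then show "w (p + t) \<noteq> 3" using Wt_D(3)[OF w t(2)] p by simp
qed (use t in simp)

lemma Wt_q2_hb:
  assumes m2: "2 \<le> m" and f: "f = 3 * m - 1"
  shows "card ((\<lambda>w. restrict w {0<..<m - 1}) ` Wt f m t)
    \<le> 3 * 6 ^ min (t - 1) (HH 0 (m - 1)) * 8 ^ (HH 0 (m - 1) - min (t - 1) (HH 0 (m - 1)))"
proof -
  note qf = q2_facts[OF m2 f]
  have "card ((\<lambda>w. restrict w {0<..<m - 1}) ` Wt f m t)
    \<le> 3 * 6 ^ min (t - 1) (HH 0 (m - 1)) * 8 ^ (HH 0 (m - 1) - min (t - 1) (HH 0 (m - 1)))"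
  proof (rule hb_region)
    fix w p assume w: "w \<in> Wt f m t" and p: "0 < p" "2 * p < 0 + (m - 1)"
    have wk: "w \<in> KW f m" using Wt_D(1)[OF w] .
    have pm: "p < m" "m - 1 - p < m" "1 \<le> m - 1 - p" "p < m - 1" using p by auto
    show "(w p, w (0 + (m - 1) - p)) \<in> P8"
      unfolding P8_def using KW_D(2,3)[OF wk, of p] KW_D(2,3)[OF wk, of "m - 1 - p"] KW_D(6)[OF wk, of p] p pm qf
      by auto
  next
    fix w p assume w: "w \<in> Wt f m t" and p: "0 < p" "p < m - 1" "2 * p = 0 + (m - 1)"
    have wk: "w \<in> KW f m" using Wt_D(1)[OF w] .
    have "p < m" "1 \<le> p" using p by auto
  then show "w p \<in> {1,2,3}" using KW_D(2,3)[OF wk, of p] qf by auto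
  next
    fix w p assume w: "w \<in> Wt f m t" and p: "0 < p" "p \<le> 0 + (t - 1)" "2 * p < 0 + (m - 1)"
    then have "p < t" by linarith
    then show "2 \<le> w p" using Wt_D(2)[OF w, of p] p(1) by simp
  qed
  then show ?thesis .
qed

abbreviation th :: real where "th \<equiv> 63 / 64"

lemma domino_real:
  assumes "2 * x \<le> H"
  shows "real (3 * 63 ^ x * 8 ^ (H - 2 * x)) = 3 * 8 ^ H * th ^ x"
proof -
  have "(8::real) ^ H = 8 ^ (H - 2 * x) * 64 ^ x"
  proof -
    have "(8::real) ^ H = 8 ^ (H - 2 * x) * 8 ^ (2 * x)" using assms by (simp add: power_add[symmetric])
    also have "(8::real) ^ (2 * x) = 64 ^ x" by (simp add: power_mult)
    finally show ?thesis .
  qed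
  moreover have "(63::real) ^ x = 64 ^ x * th ^ x" by (simp add: power_divide)
  ultimately show ?thesis by simp
qed

lemma hb_real:
  assumes "h \<le> H"
  shows "real (3 * 6 ^ h * 8 ^ (H - h)) \<le> 3 * 8 ^ H * th ^ h"
proof -
  have "(8::real) ^ H = 8 ^ (H - h) * 8 ^ h" using assms by (simp add: power_add[symmetric])
  moreover have "(6::real) ^ h \<le> 8 ^ h * th ^ h"
  proof -
    have "(6::real) ^ h \<le> (8 * th) ^ h" by (rule power_mono) auto
    then show ?thesis by (simp only: power_mult_distrib)
  qed
  ultimately show ?thesis by simp
qed

lemma th_pow_le: assumes "f \<le> 300 * g + 600" shows "th ^ g \<le> th ^ (f div 300) / th ^ 2"
proof -
  have "f div 300 \<le> g + 2" using assms by linarith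
  then have "th ^ (g + 2) \<le> th ^ (f div 300)" by (rule power_decreasing) auto
  then show ?thesis by (simp add: power_add field_simps)
qed

lemma two_pow_le_sqrt: assumes "2 * k \<le> f" shows "(2::real) ^ k \<le> sqrt 2 ^ f"
proof -
  have "(2::real) ^ k = sqrt 2 ^ (2 * k)" by (simp add: power_mult)
  also have "\<dots> \<le> sqrt 2 ^ f" by (rule power_increasing[OF assms]) simp
  finally show ?thesis .
qed

lemma Wt_q3_gain:
  assumes m2: "2 \<le> m" and q3: "f div m = 3" and s0: "0 < f mod m" and t: "t \<in> {1..m}"
  shows "\<exists>g. real (card ((\<lambda>w. restrict w {f mod m<..<m}) ` Wt f m t)) \<le> 3 * 8 ^ HH (f mod m) m * th ^ g
    \<and> f \<le> 300 * (HH 0 (f mod m) + g) + 600"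
proof -
  define s where "s = f mod m"
  define H2 where "H2 = HH s m"
  define H1 where "H1 = HH 0 s"
  have sm: "s < m" unfolding s_def using m2 by simp
  have fe: "f = 3 * m + s" unfolding s_def using q3 div_mult_mod_eq[of f m] by simp
  have h1: "s \<le> 2 * H1 + 2" unfolding H1_def HH_def by simp
  have h2: "m \<le> 2 * H2 + s + 2" unfolding H2_def HH_def by simp
  have hH: "H2 \<le> m" unfolding H2_def HH_def by simp
  have t1: "1 \<le> t" "t \<le> m" using t by auto
  show ?thesis
  proof (cases "t < m \<and> 4 * t \<le> H2")
    case True
    define J where "J = H2 div (2 * t)"
    have HJ0: "H2 = (2 * t) * J + H2 mod (2 * t)" unfolding J_def by simp
    have HJ: "H2 = 2 * (t * J) + H2 mod (2 * t)" "H2 mod (2 * t) < 2 * t"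
      using HJ0 t1 by (simp_all add: mult.assoc)
    have X: "H2 \<le> 4 * (t * J)" using HJ True by linarith
    have "real (card ((\<lambda>w. restrict w {s<..<m}) ` Wt f m t)) \<le> real (3 * 63 ^ (t * J) * 8 ^ (H2 - 2 * t * J))"
      using Wt_q3_domino[OF m2 q3 s0 t1(1)] True unfolding s_def[symmetric] H2_def[symmetric] J_def by linarith
    also have "\<dots> = 3 * 8 ^ H2 * th ^ (t * J)" using domino_real[of "t * J" H2] HJ by (simp add: mult.assoc)
    finally have "real (card ((\<lambda>w. restrict w {s<..<m}) ` Wt f m t)) \<le> 3 * 8 ^ H2 * th ^ (t * J)" .
    moreover have "f \<le> 300 * (H1 + t * J) + 600"
    proof -
      obtain X where Xd: "X = t * J" by blast
      have X': "H2 \<le> 4 * X" using X unfolding Xd[symmetric] .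
      have "m \<le> 8 * X + s + 2" using X' h2 by linarith
      then have "f \<le> 24 * X + 4 * s + 6" using fe by linarith
      then have "f \<le> 300 * (H1 + X) + 600" using h1 by (simp add: algebra_simps)
      then show ?thesis unfolding Xd .
    qed
    ultimately show ?thesis unfolding s_def H1_def H2_def by blast
  next
    case False
    define g where "g = min (t - s - 1) H2"
    have "real (card ((\<lambda>w. restrict w {s<..<m}) ` Wt f m t)) \<le> real (3 * 6 ^ g * 8 ^ (H2 - g))"
      using Wt_q3_hb[OF m2 q3 s0, of t] unfolding s_def[symmetric] H2_def[symmetric] g_def by linarith
    also have "\<dots> \<le> 3 * 8 ^ H2 * th ^ g" by (rule hb_real) (simp add: g_def)
    finally have A: "real (card ((\<lambda>w. restrict w {s<..<m}) ` Wt f m t)) \<le> 3 * 8 ^ H2 * th ^ g" .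
    have "f \<le> 300 * (H1 + g) + 600"
    proof (cases "g = H2")
      case True
      have "m \<le> 2 * H2 + s + 2" by (rule h2)
      then show ?thesis using True fe h1 sm by (simp add: algebra_simps)
    next
      case gF: False
      then have g1: "t \<le> g + s + 1" unfolding g_def by linarith
      have "H2 < 4 * t" using False t1 hH by (cases "t < m") auto
      then have "m \<le> 8 * g + 9 * s + 8" using g1 h2 by linarith
      then show ?thesis using fe h1 by (simp add: algebra_simps)
    qed
    then show ?thesis using A unfolding s_def H1_def H2_def by blast
  qed
qed

lemma Wt_q2_gain:
  assumes m2: "2 \<le> m" and f: "f = 3 * m - 1" and t: "t \<in> {1..m}"
  shows "\<exists>g. real (card ((\<lambda>w. restrict w {0<..<m - 1}) ` Wt f m t)) \<le> 3 * 8 ^ HH 0 (m - 1) * th ^ g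
    \<and> f \<le> 300 * g + 600"
proof -
  define H where "H = HH 0 (m - 1)"
  have h2: "m \<le> 2 * H + 4" unfolding H_def HH_def by simp
  have hH: "H \<le> m" unfolding H_def HH_def by simp
  have t1: "1 \<le> t" "t \<le> m" using t by auto
  show ?thesis
  proof (cases "t < m \<and> 4 * t \<le> H")
    case True
    define J where "J = H div (2 * t)"
    have HJ0: "H = (2 * t) * J + H mod (2 * t)" unfolding J_def by simp
    have HJ: "H = 2 * (t * J) + H mod (2 * t)" "H mod (2 * t) < 2 * t"
      using HJ0 t1 by (simp_all add: mult.assoc)
    have X: "H \<le> 4 * (t * J)" using HJ True by linarith
    have "real (card ((\<lambda>w. restrict w {0<..<m - 1}) ` Wt f m t)) \<le> real (3 * 63 ^ (t * J) * 8 ^ (H - 2 * t * J))"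
      using Wt_q2_domino[OF m2 f t1(1)] True unfolding H_def[symmetric] J_def by linarith
    also have "\<dots> = 3 * 8 ^ H * th ^ (t * J)" using domino_real[of "t * J" H] HJ by (simp add: mult.assoc)
    finally have "real (card ((\<lambda>w. restrict w {0<..<m - 1}) ` Wt f m t)) \<le> 3 * 8 ^ H * th ^ (t * J)" .
    moreover have "f \<le> 300 * (t * J) + 600"
    proof -
      obtain X where Xd: "X = t * J" by blast
      have "f \<le> 300 * X + 600" using X f h2 unfolding Xd[symmetric] by linarith
      then show ?thesis unfolding Xd .
    qed
    ultimately show ?thesis unfolding H_def by blast
  next
    case False
    define g where "g = min (t - 1) H"
    have "real (card ((\<lambda>w. restrict w {0<..<m - 1}) ` Wt f m t)) \<le> real (3 * 6 ^ g * 8 ^ (H - g))"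
      using Wt_q2_hb[OF m2 f, of t] unfolding H_def[symmetric] g_def by linarith
    also have "\<dots> \<le> 3 * 8 ^ H * th ^ g" by (rule hb_real) (simp add: g_def)
    finally have A: "real (card ((\<lambda>w. restrict w {0<..<m - 1}) ` Wt f m t)) \<le> 3 * 8 ^ H * th ^ g" .
    have "f \<le> 300 * g + 600"
    proof (cases "g = H")
      case True then show ?thesis using f h2 by linarith
    next
      case gF: False
      then have g1: "t \<le> g + 1" unfolding g_def by linarith
      have "H < 4 * t" using False t1 hH by (cases "t < m") auto
      then show ?thesis using g1 f h2 by linarith
    qed
    then show ?thesis using A unfolding H_def by blast
  qed
qed


lemma Nm_mod0: assumes "f mod m = 0" shows "Nm f m = 0"
proof -
  have "{L \<in> Sg f. multiplicity L = m} = {}"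
  proof (rule ccontr)
    assume "{L \<in> Sg f. multiplicity L = m} \<noteq> {}"
    then obtain L where L: "L \<in> Sg f" "multiplicity L = m" by auto
    interpret kunz L f m using L by unfold_locales auto
    show False using s_pos assms by simp
  qed
  then show ?thesis unfolding Nm_def by (metis card.empty)
qed

lemma Q_pow: assumes "4 \<le> Q" shows "real (Q^2 - 1) \<le> (63/32) ^ Q"
  using assms
proof (induction Q rule: dec_induct)
  case base then show ?case by (simp add: power_divide)
next
  case (step n)
  have n1: "1 \<le> n" using step(1) by simp
  have "real (Suc n ^ 2 - 1) = real n ^ 2 + 2 * real n"
    by (simp add: power2_eq_square of_nat_diff algebra_simps)
  also have "\<dots> \<le> (63/32) * (real n ^ 2 - 1)"
  proof -
    have n4: "(4::real) \<le> real n" using step(1) by simp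
    then have "4 * real n \<le> real n * real n" by (intro mult_right_mono) auto
    then have "0 \<le> (31/32) * real n ^ 2 - 2 * real n - 63/32"
      using n4 unfolding power2_eq_square by linarith
    then show ?thesis by (simp add: algebra_simps)
  qed
  also have "real n ^ 2 - 1 = real (n^2 - 1)" using n1 by (simp add: of_nat_diff)
  also have "(63/32) * real (n^2 - 1) \<le> (63/32) * (63/32) ^ n" using step(3) by simp
  finally show ?case by simp
qed

lemma sqrt_th_le: "sqrt th ^ f \<le> th ^ (f div 300)"
proof -
  have "sqrt th ^ f \<le> sqrt th ^ (2 * (f div 300))" by (rule power_decreasing) auto
  also have "\<dots> = th ^ (f div 300)" by (simp add: power_mult)
  finally show ?thesis .
qed

lemma KW_q4_real:
  assumes m2: "2 \<le> m" and q4: "4 \<le> f div m" and s0: "0 < f mod m"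
  shows "real (card (KW f m)) \<le> real (f + 1) ^ 3 * sqrt 2 ^ f * th ^ (f div 300)"
proof -
  define q where "q = f div m"
  define s where "s = f mod m"
  define H1 where "H1 = HH 0 s"
  define H2 where "H2 = HH s m"
  define c :: real where "c = 63/32"
  have sm: "s < m" unfolding s_def using m2 by simp
  have s1: "1 \<le> s" using s0 unfolding s_def by simp
  have q4': "4 \<le> q" using q4 unfolding q_def .
  have "card (KW f m) \<le> (q + 1) * ((q + 1)^2 - 1) ^ H1 * ((q + 1) * (q * (q^2 - 1) ^ H2))"
    using KW_q4[OF m2 q4 s0] unfolding q_def s_def H1_def H2_def .
  then have "real (card (KW f m)) \<le> real (q + 1) * real ((q + 1)^2 - 1) ^ H1 * (real (q + 1) * (real q * real (q^2 - 1) ^ H2))"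
    by (metis (mono_tags) of_nat_le_iff of_nat_mult of_nat_power)
  also have "\<dots> \<le> real (q + 1) * (c ^ (q + 1)) ^ H1 * (real (q + 1) * (real (q + 1) * (c ^ q) ^ H2))"
  proof (intro mult_mono power_mono mult_nonneg_nonneg zero_le_power)
    show "real ((q + 1)^2 - 1) \<le> c ^ (q + 1)" unfolding c_def by (rule Q_pow) (use q4' in simp)
    show "real (q^2 - 1) \<le> c ^ q" unfolding c_def by (rule Q_pow) (use q4' in simp)
  qed (auto simp: c_def)
  also have "\<dots> = real (q + 1) ^ 3 * c ^ ((q + 1) * H1 + q * H2)"
  proof -
    have e1: "(c ^ (q + 1)) ^ H1 = c ^ ((q + 1) * H1)" by (simp only: power_mult)
    have e2: "(c ^ q) ^ H2 = c ^ (q * H2)" by (simp only: power_mult)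
    show ?thesis unfolding e1 e2 by (simp only: power_add power3_eq_cube mult_ac)
  qed
  also have "\<dots> \<le> real (f + 1) ^ 3 * (sqrt 2 ^ f * th ^ (f div 300))"
  proof (rule mult_mono)
    have "q \<le> f" unfolding q_def by simp
    then show "real (q + 1) ^ 3 \<le> real (f + 1) ^ 3" by (intro power_mono) auto
    have E: "2 * ((q + 1) * H1 + q * H2) \<le> f"
    proof -
      obtain s' where s': "s = s' + 1" using s1 by (metis add.commute le_Suc_ex)
      obtain m' where m': "m = s + 1 + m'" using sm by (metis add_Suc_right add.commute less_imp_Suc_add plus_1_eq_Suc)
      have a: "2 * H1 \<le> s'" unfolding H1_def HH_def s' by simp
      have b: "2 * H2 \<le> m'" unfolding H2_def HH_def m' by simp
      have A: "(q + 1) * (2 * H1) \<le> (q + 1) * s'" using a by (rule mult_le_mono2)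
      have B: "q * (2 * H2) \<le> q * m'" using b by (rule mult_le_mono2)
      have "2 * ((q + 1) * H1 + q * H2) = (q + 1) * (2 * H1) + q * (2 * H2)" by (simp add: algebra_simps)
      also have "\<dots> \<le> (q + 1) * s' + q * m'" using A B by (rule add_mono)
      also have "\<dots> \<le> q * m + s" unfolding m' s' by (simp add: algebra_simps)
      also have "q * m + s = f" unfolding q_def s_def by simp
      finally show ?thesis .
    qed
    have "sqrt c ^ (2 * ((q + 1) * H1 + q * H2)) = (sqrt c ^ 2) ^ ((q + 1) * H1 + q * H2)"
      by (rule power_mult)
    also have "sqrt c ^ 2 = c" by (simp add: c_def)
    finally have "c ^ ((q + 1) * H1 + q * H2) = sqrt c ^ (2 * ((q + 1) * H1 + q * H2))" by simp
    also have "\<dots> \<le> sqrt c ^ f" by (rule power_increasing[OF E]) (simp add: c_def)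
    also have "sqrt c = sqrt 2 * sqrt th" unfolding c_def by (simp add: real_sqrt_mult[symmetric])
    also have "(sqrt 2 * sqrt th) ^ f = sqrt 2 ^ f * sqrt th ^ f" by (simp add: power_mult_distrib)
    also have "\<dots> \<le> sqrt 2 ^ f * th ^ (f div 300)" using sqrt_th_le by (intro mult_left_mono) auto
    finally show "c ^ ((q + 1) * H1 + q * H2) \<le> sqrt 2 ^ f * th ^ (f div 300)" .
  qed (auto simp: c_def)
  finally show ?thesis by (simp add: mult.assoc)
qed


lemma KW_q3_real:
  assumes m2: "2 \<le> m" and q3: "f div m = 3" and s0: "0 < f mod m"
  shows "real (card (KW f m)) \<le> 50 * real (f + 1) * sqrt 2 ^ f * th ^ (f div 300)"
proof -
  define s where "s = f mod m"
  define H1 where "H1 = HH 0 s"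
  define H2 where "H2 = HH s m"
  define X where "X t = card ((\<lambda>w. restrict w {s<..<m}) ` Wt f m t)" for t
  define B :: real where "B = 3 * 16 ^ H1 * 8 ^ H2 * (th ^ (f div 300) / th ^ 2)"
  have sm: "s < m" unfolding s_def using m2 by simp
  have fe: "f = 3 * m + s" unfolding s_def using q3 div_mult_mod_eq[of f m] by simp
  have "card (KW f m) \<le> 4 * 15 ^ H1 * (4 * (\<Sum>t\<in>{1..m}. X t))"
    using KW_q3[OF m2 q3 s0] unfolding s_def[symmetric] H1_def[symmetric] X_def .
  then have "real (card (KW f m)) \<le> real (4 * 15 ^ H1 * (4 * (\<Sum>t\<in>{1..m}. X t)))"
    by (simp only: of_nat_le_iff)
  also have "\<dots> = 16 * (\<Sum>t\<in>{1..m}. 15 ^ H1 * real (X t))"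
    by (simp add: of_nat_sum sum_distrib_left)
  also have "\<dots> \<le> 16 * (\<Sum>t\<in>{1..m}. B)"
  proof (intro mult_left_mono sum_mono)
    fix t assume t: "t \<in> {1..m}"
    obtain g where g: "real (X t) \<le> 3 * 8 ^ H2 * th ^ g" "f \<le> 300 * (H1 + g) + 600"
      using Wt_q3_gain[OF m2 q3 s0 t] unfolding s_def[symmetric] H1_def[symmetric] H2_def[symmetric] X_def by blast
    have "(15::real) ^ H1 \<le> (16 * th) ^ H1" by (rule power_mono) auto
    then have a: "(15::real) ^ H1 \<le> 16 ^ H1 * th ^ H1" by (simp only: power_mult_distrib)
    have "15 ^ H1 * real (X t) \<le> (16 ^ H1 * th ^ H1) * (3 * 8 ^ H2 * th ^ g)"
      by (rule mult_mono[OF a g(1)]) auto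
    also have "\<dots> = 3 * 16 ^ H1 * 8 ^ H2 * th ^ (H1 + g)" by (simp add: power_add)
    also have "\<dots> \<le> B" unfolding B_def using th_pow_le[OF g(2)] by (intro mult_left_mono) auto
    finally show "15 ^ H1 * real (X t) \<le> B" .
  qed simp
  also have "\<dots> = 16 * real m * B" by simp
  also have "\<dots> \<le> 50 * real (f + 1) * sqrt 2 ^ f * th ^ (f div 300)"
  proof -
    have "(16::real) ^ H1 * 8 ^ H2 = 2 ^ (4 * H1 + 3 * H2)" by (simp add: power_add power_mult)
    also have "\<dots> \<le> sqrt 2 ^ f"
    proof (rule two_pow_le_sqrt)
      have "2 * H1 \<le> s" "2 * H2 \<le> m - s" unfolding H1_def H2_def HH_def by auto
      moreover have "2 * (4 * H1 + 3 * H2) = 8 * H1 + 6 * H2" by simp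
      ultimately show "2 * (4 * H1 + 3 * H2) \<le> f" using fe sm by linarith
    qed
    finally have p: "(16::real) ^ H1 * 8 ^ H2 \<le> sqrt 2 ^ f" .
    have mf: "real m \<le> real (f + 1)" using fe by simp
    have "16 * real m * B = (48 / th ^ 2) * real m * ((16 ^ H1 * 8 ^ H2) * th ^ (f div 300))"
      unfolding B_def by (simp add: field_simps)
    also have "\<dots> \<le> 50 * real (f + 1) * (sqrt 2 ^ f * th ^ (f div 300))"
    proof (intro mult_mono mf p)
      show "48 / th ^ 2 \<le> 50" by (simp add: power_divide)
    qed auto
    finally show ?thesis by (simp add: mult.assoc)
  qed
  finally show ?thesis .
qed

lemma KW_q2_real:
  assumes m2: "2 \<le> m" and f: "f = 3 * m - 1"
  shows "real (card (KW f m)) \<le> 50 * real (f + 1) * sqrt 2 ^ f * th ^ (f div 300)"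
proof -
  define H where "H = HH 0 (m - 1)"
  define X where "X t = card ((\<lambda>w. restrict w {0<..<m - 1}) ` Wt f m t)" for t
  define B :: real where "B = 3 * 8 ^ H * (th ^ (f div 300) / th ^ 2)"
  have "card (KW f m) \<le> 3 * (\<Sum>t\<in>{1..m}. X t)"
    using KW_q2[OF m2 f] unfolding X_def .
  then have "real (card (KW f m)) \<le> real (3 * (\<Sum>t\<in>{1..m}. X t))"
    by (simp only: of_nat_le_iff)
  also have "\<dots> = 3 * (\<Sum>t\<in>{1..m}. real (X t))" by (simp add: of_nat_sum)
  also have "\<dots> \<le> 3 * (\<Sum>t\<in>{1..m}. B)"
  proof (intro mult_left_mono sum_mono)
    fix t assume t: "t \<in> {1..m}"
    obtain g where g: "real (X t) \<le> 3 * 8 ^ H * th ^ g" "f \<le> 300 * g + 600"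
      using Wt_q2_gain[OF m2 f t] unfolding H_def[symmetric] X_def by blast
    have "real (X t) \<le> 3 * 8 ^ H * th ^ g" by (rule g(1))
    also have "\<dots> \<le> B" unfolding B_def using th_pow_le[of f g] g(2) by (intro mult_left_mono) auto
    finally show "real (X t) \<le> B" .
  qed simp
  also have "\<dots> = 3 * real m * B" by simp
  also have "\<dots> \<le> 50 * real (f + 1) * sqrt 2 ^ f * th ^ (f div 300)"
  proof -
    have "(8::real) ^ H = 2 ^ (3 * H)" by (simp add: power_mult)
    also have "\<dots> \<le> sqrt 2 ^ f"
    proof (rule two_pow_le_sqrt)
      have "2 * H \<le> m - 1" unfolding H_def HH_def by auto
      moreover have "2 * (3 * H) = 6 * H" by simp
      ultimately show "2 * (3 * H) \<le> f" using f m2 by linarith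
    qed
    finally have p: "(8::real) ^ H \<le> sqrt 2 ^ f" .
    have mf: "real m \<le> real (f + 1)" using f m2 by simp
    have "3 * real m * B = (9 / th ^ 2) * real m * (8 ^ H * th ^ (f div 300))"
      unfolding B_def by (simp add: field_simps)
    also have "\<dots> \<le> 50 * real (f + 1) * (sqrt 2 ^ f * th ^ (f div 300))"
    proof (intro mult_mono mf p)
      show "9 / th ^ 2 \<le> 50" by (simp add: power_divide)
    qed auto
    finally show ?thesis by (simp add: mult.assoc)
  qed
  finally show ?thesis .
qed

lemma Nm_small_bound:
  assumes m2: "2 \<le> m" and mf: "3 * m \<le> f + 1"
  shows "real (Nm f m) \<le> 50 * real (f + 1) ^ 3 * sqrt 2 ^ f * th ^ (f div 300)"
proof (cases "f mod m = 0")
  case True then show ?thesis using Nm_mod0 by simp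
next
  case False
  then have s0: "0 < f mod m" by simp
  have K: "real (Nm f m) \<le> real (card (KW f m))" using Nm_le_KW by simp
  have f1: "real (f + 1) \<le> real (f + 1) ^ 3" by (rule self_le_power) auto
  have pos: "0 \<le> sqrt 2 ^ f * th ^ (f div 300)" by simp
  have q2: "2 \<le> f div m"
  proof -
    have "m * 2 \<le> f" using mf m2 by linarith
    then show ?thesis using m2 by (simp add: le_div_geq div_le_mono less_eq_div_iff_mult_less_eq)
  qed
  consider "4 \<le> f div m" | "f div m = 3" | "f div m = 2" using q2 by linarith
  then show ?thesis
  proof cases
    case 1
    have "real (card (KW f m)) \<le> real (f + 1) ^ 3 * sqrt 2 ^ f * th ^ (f div 300)"
      by (rule KW_q4_real[OF m2 1 s0])
    also have "\<dots> \<le> 50 * real (f + 1) ^ 3 * sqrt 2 ^ f * th ^ (f div 300)" by simp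
    finally show ?thesis using K by linarith
  next
    case 2
    have "real (card (KW f m)) \<le> 50 * real (f + 1) * sqrt 2 ^ f * th ^ (f div 300)"
      by (rule KW_q3_real[OF m2 2 s0])
    also have "\<dots> \<le> 50 * real (f + 1) ^ 3 * sqrt 2 ^ f * th ^ (f div 300)"
      using mult_right_mono[OF f1 pos] by (simp add: mult.assoc)
    finally show ?thesis using K by linarith
  next
    case 3
    have "f = m * (f div m) + f mod m" by simp
    moreover have "f mod m < m" using m2 by simp
    ultimately have "f < 3 * m" using 3 by simp
    then have fe: "f = 3 * m - 1" using mf by linarith
    have "real (card (KW f m)) \<le> 50 * real (f + 1) * sqrt 2 ^ f * th ^ (f div 300)"
      by (rule KW_q2_real[OF m2 fe])
    also have "\<dots> \<le> 50 * real (f + 1) ^ 3 * sqrt 2 ^ f * th ^ (f div 300)"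
      using mult_right_mono[OF f1 pos] by (simp add: mult.assoc)
    finally show ?thesis using K by linarith
  qed
qed

lemma geo_sum: "(\<Sum>m\<in>{k<..<k + K + 1}. (2::nat) ^ (k + K - m)) = 2 ^ K - 1"
proof (induction K)
  case 0 then show ?case by simp
next
  case (Suc K)
  have e: "{k<..<k + Suc K + 1} = insert (k + K + 1) {k<..<k + K + 1}" by auto
  have "(\<Sum>m\<in>{k<..<k + Suc K + 1}. (2::nat) ^ (k + Suc K - m))
      = 1 + (\<Sum>m\<in>{k<..<k + K + 1}. 2 ^ (k + Suc K - m))" unfolding e by simp
  also have "(\<Sum>m\<in>{k<..<k + K + 1}. (2::nat) ^ (k + Suc K - m)) = (\<Sum>m\<in>{k<..<k + K + 1}. 2 * 2 ^ (k + K - m))"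
    by (rule sum.cong) (auto simp: Suc_diff_le)
  also have "\<dots> = 2 * (\<Sum>m\<in>{k<..<k + K + 1}. (2::nat) ^ (k + K - m))" by (simp add: sum_distrib_left)
  also have "\<dots> = 2 * (2 ^ K - 1)" using Suc.IH by simp
  finally have X: "(\<Sum>m\<in>{k<..<k + Suc K + 1}. (2::nat) ^ (k + Suc K - m)) = 1 + 2 * (2 ^ K - 1)" .
  have "(1::nat) \<le> 2 ^ K" by simp
  then have "1 + 2 * (2 ^ K - 1) = 2 * (2::nat) ^ K - 1" by linarith
  then show ?case unfolding X by simp
qed

lemma S0: "S 0 = 0" unfolding S_Nm using Nm_one by simp

lemma Nm_even_mid: assumes "3 * j + 1 \<le> n" shows "Nm (2 * n) (n - j) = S (2 * j) * 2 ^ (n - 3 * j - 1)"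
proof (cases "j = 0")
  case True then show ?thesis using Nm_half S0 by simp
next
  case False
  have "Nm (2 * (n - j) + 2 * j) (n - j) = S (2 * j) * 2 ^ (n - j - 1 - 2 * j)"
    by (rule Nm_mid) (use assms False in auto)
  moreover have "2 * (n - j) + 2 * j = 2 * n" using assms by simp
  moreover have "n - j - 1 - 2 * j = n - 3 * j - 1" by simp
  ultimately show ?thesis by simp
qed

lemma Nm_odd_mid: assumes "3 * j + 2 \<le> n" shows "Nm (2 * n + 1) (n - j) = S (2 * j + 1) * 2 ^ (n - 3 * j - 2)"
proof -
  have "Nm (2 * (n - j) + (2 * j + 1)) (n - j) = S (2 * j + 1) * 2 ^ (n - j - 1 - (2 * j + 1))"
    by (rule Nm_mid) (use assms in auto)
  moreover have "2 * (n - j) + (2 * j + 1) = 2 * n + 1" using assms by simp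
  moreover have "n - j - 1 - (2 * j + 1) = n - 3 * j - 2" by simp
  ultimately show ?thesis by simp
qed

definition SA :: "nat \<Rightarrow> nat" where
  "SA f = (\<Sum>m\<in>{m \<in> {1..Suc f}. 3 * m \<le> f}. Nm f m)"

lemma Fr_even:
  assumes n1: "1 \<le> n"
  shows "Fr (2 * n) = 2 ^ (n - 1) + (\<Sum>j<(n + 2) div 3. S (2 * j) * 2 ^ (n - 3 * j - 1)) + SA (2 * n)"
proof -
  define A where "A = {m \<in> {1..Suc (2 * n)}. 3 * m \<le> 2 * n}"
  define B where "B = {m \<in> {1..Suc (2 * n)}. 2 * n < 3 * m \<and> m \<le> n}"
  define C where "C = {n<..Suc (2 * n)}"
  have U: "{1..Suc (2 * n)} = A \<union> B \<union> C" unfolding A_def B_def C_def using n1 by auto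
  have dAB: "A \<inter> B = {}" unfolding A_def B_def by auto
  have dAC: "(A \<union> B) \<inter> C = {}" unfolding A_def B_def C_def by auto
  have "Fr (2 * n) = (\<Sum>m\<in>A \<union> B \<union> C. Nm (2 * n) m)" unfolding Fr_sum U ..
  also have "\<dots> = (\<Sum>m\<in>A. Nm (2 * n) m) + (\<Sum>m\<in>B. Nm (2 * n) m) + (\<Sum>m\<in>C. Nm (2 * n) m)"
    using dAB dAC unfolding A_def B_def C_def by (simp add: sum.union_disjoint)
  also have "(\<Sum>m\<in>A. Nm (2 * n) m) = SA (2 * n)" unfolding A_def SA_def ..
  also have "(\<Sum>m\<in>C. Nm (2 * n) m) = 2 ^ (n - 1)"
  proof -
    have eC: "C = {n<..<2 * n} \<union> {2 * n, Suc (2 * n)}" unfolding C_def using n1 by auto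
    have "(\<Sum>m\<in>C. Nm (2 * n) m) = (\<Sum>m\<in>{n<..<2 * n}. Nm (2 * n) m) + (\<Sum>m\<in>{2 * n, Suc (2 * n)}. Nm (2 * n) m)"
      unfolding eC by (rule sum.union_disjoint) auto
    also have "(\<Sum>m\<in>{2 * n, Suc (2 * n)}. Nm (2 * n) m) = 1" using Nm_f Nm_top n1 by simp
    also have "(\<Sum>m\<in>{n<..<2 * n}. Nm (2 * n) m) = (\<Sum>m\<in>{n<..<n + (n - 1) + 1}. 2 ^ (n + (n - 1) - m))"
    proof -
      have e: "n + (n - 1) + 1 = 2 * n" using n1 by simp
      show ?thesis unfolding e
      proof (rule sum.cong[OF refl])
        fix m assume "m \<in> {n<..<2 * n}"
        then show "Nm (2 * n) m = 2 ^ (n + (n - 1) - m)" using Nm_big[of "2 * n" m] by simp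
      qed
    qed
    also have "\<dots> = 2 ^ (n - 1) - 1" by (rule geo_sum)
    finally show ?thesis by simp
  qed
  also have "(\<Sum>m\<in>B. Nm (2 * n) m) = (\<Sum>j<(n + 2) div 3. S (2 * j) * 2 ^ (n - 3 * j - 1))"
  proof -
    have eB: "B = (\<lambda>j. n - j) ` {..<(n + 2) div 3}"
    proof
      show "B \<subseteq> (\<lambda>j. n - j) ` {..<(n + 2) div 3}"
      proof
        fix m assume "m \<in> B"
        then have m: "1 \<le> m" "2 * n < 3 * m" "m \<le> n" unfolding B_def by auto
        then have "n - m < (n + 2) div 3" "m = n - (n - m)" by auto
        then show "m \<in> (\<lambda>j. n - j) ` {..<(n + 2) div 3}" by blast
      qed
      show "(\<lambda>j. n - j) ` {..<(n + 2) div 3} \<subseteq> B" unfolding B_def using n1 by auto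
    qed
    have inj: "inj_on (\<lambda>j. n - j) {..<(n + 2) div 3}" by (rule inj_onI) auto
    have "(\<Sum>m\<in>B. Nm (2 * n) m) = (\<Sum>j<(n + 2) div 3. Nm (2 * n) (n - j))"
      unfolding eB by (rule sum.reindex[OF inj, unfolded comp_def])
    also have "\<dots> = (\<Sum>j<(n + 2) div 3. S (2 * j) * 2 ^ (n - 3 * j - 1))"
    proof (rule sum.cong[OF refl])
      fix j assume "j \<in> {..<(n + 2) div 3}"
      moreover have "3 * ((n + 2) div 3) \<le> n + 2" by (rule times_div_less_eq_dividend)
      ultimately have "3 * j + 1 \<le> n" by auto
      then show "Nm (2 * n) (n - j) = S (2 * j) * 2 ^ (n - 3 * j - 1)" by (rule Nm_even_mid)
    qed
    finally show ?thesis .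
  qed
  finally show ?thesis by simp
qed

lemma Fr_odd:
  assumes n1: "1 \<le> n"
  shows "Fr (2 * n + 1) = 2 ^ n + (\<Sum>j<(n + 1) div 3. S (2 * j + 1) * 2 ^ (n - 3 * j - 2)) + SA (2 * n + 1)"
proof -
  define A where "A = {m \<in> {1..Suc (2 * n + 1)}. 3 * m \<le> 2 * n + 1}"
  define B where "B = {m \<in> {1..Suc (2 * n + 1)}. 2 * n + 1 < 3 * m \<and> m \<le> n}"
  define C where "C = {n<..Suc (2 * n + 1)}"
  have U: "{1..Suc (2 * n + 1)} = A \<union> B \<union> C" unfolding A_def B_def C_def using n1 by auto
  have dAB: "A \<inter> B = {}" unfolding A_def B_def by auto
  have dAC: "(A \<union> B) \<inter> C = {}" unfolding A_def B_def C_def by auto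
  have "Fr (2 * n + 1) = (\<Sum>m\<in>A \<union> B \<union> C. Nm (2 * n + 1) m)" unfolding Fr_sum U ..
  also have "\<dots> = (\<Sum>m\<in>A. Nm (2 * n + 1) m) + (\<Sum>m\<in>B. Nm (2 * n + 1) m) + (\<Sum>m\<in>C. Nm (2 * n + 1) m)"
    using dAB dAC unfolding A_def B_def C_def by (simp add: sum.union_disjoint)
  also have "(\<Sum>m\<in>A. Nm (2 * n + 1) m) = SA (2 * n + 1)" unfolding A_def SA_def ..
  also have "(\<Sum>m\<in>C. Nm (2 * n + 1) m) = 2 ^ n"
  proof -
    have eC: "C = {n<..<2 * n + 1} \<union> {2 * n + 1, Suc (2 * n + 1)}" unfolding C_def using n1 by auto
    have "(\<Sum>m\<in>C. Nm (2 * n + 1) m) = (\<Sum>m\<in>{n<..<2 * n + 1}. Nm (2 * n + 1) m) + (\<Sum>m\<in>{2 * n + 1, Suc (2 * n + 1)}. Nm (2 * n + 1) m)"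
      unfolding eC by (rule sum.union_disjoint) auto
    also have "(\<Sum>m\<in>{2 * n + 1, Suc (2 * n + 1)}. Nm (2 * n + 1) m) = 1" using Nm_f Nm_top by simp
    also have "(\<Sum>m\<in>{n<..<2 * n + 1}. Nm (2 * n + 1) m) = (\<Sum>m\<in>{n<..<n + n + 1}. 2 ^ (n + n - m))"
    proof -
      have e: "n + n + 1 = 2 * n + 1" by simp
      show ?thesis unfolding e
      proof (rule sum.cong[OF refl])
        fix m assume "m \<in> {n<..<2 * n + 1}"
        then show "Nm (2 * n + 1) m = 2 ^ (n + n - m)" using Nm_big[of "2 * n + 1" m] by simp
      qed
    qed
    also have "\<dots> = 2 ^ n - 1" by (rule geo_sum)
    finally show ?thesis by simp
  qed
  also have "(\<Sum>m\<in>B. Nm (2 * n + 1) m) = (\<Sum>j<(n + 1) div 3. S (2 * j + 1) * 2 ^ (n - 3 * j - 2))"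
  proof -
    have eB: "B = (\<lambda>j. n - j) ` {..<(n + 1) div 3}"
    proof
      show "B \<subseteq> (\<lambda>j. n - j) ` {..<(n + 1) div 3}"
      proof
        fix m assume "m \<in> B"
        then have m: "1 \<le> m" "2 * n + 1 < 3 * m" "m \<le> n" unfolding B_def by auto
        then have "n - m < (n + 1) div 3" "m = n - (n - m)" by auto
        then show "m \<in> (\<lambda>j. n - j) ` {..<(n + 1) div 3}" by blast
      qed
      show "(\<lambda>j. n - j) ` {..<(n + 1) div 3} \<subseteq> B" unfolding B_def using n1 by auto
    qed
    have inj: "inj_on (\<lambda>j. n - j) {..<(n + 1) div 3}" by (rule inj_onI) auto
    have "(\<Sum>m\<in>B. Nm (2 * n + 1) m) = (\<Sum>j<(n + 1) div 3. Nm (2 * n + 1) (n - j))"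
      unfolding eB by (rule sum.reindex[OF inj, unfolded comp_def])
    also have "\<dots> = (\<Sum>j<(n + 1) div 3. S (2 * j + 1) * 2 ^ (n - 3 * j - 2))"
    proof (rule sum.cong[OF refl])
      fix j assume "j \<in> {..<(n + 1) div 3}"
      moreover have "3 * ((n + 1) div 3) \<le> n + 1" by (rule times_div_less_eq_dividend)
      ultimately have "3 * j + 2 \<le> n" by auto
      then show "Nm (2 * n + 1) (n - j) = S (2 * j + 1) * 2 ^ (n - 3 * j - 2)" by (rule Nm_odd_mid)
    qed
    finally show ?thesis .
  qed
  finally show ?thesis by simp
qed

lemma SA_bound: "real (SA f) \<le> 50 * real (f + 1) ^ 4 * sqrt 2 ^ f * th ^ (f div 300)"
proof -
  define I where "I = {m \<in> {1..Suc f}. 3 * m \<le> f}"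
  define c :: real where "c = 50 * real (f + 1) ^ 3 * sqrt 2 ^ f * th ^ (f div 300)"
  have c0: "0 \<le> c" unfolding c_def by simp
  have "real (SA f) = (\<Sum>m\<in>I. real (Nm f m))" unfolding SA_def I_def by simp
  also have "\<dots> \<le> (\<Sum>m\<in>I. c)"
  proof (rule sum_mono)
    fix m assume "m \<in> I"
    then have m: "1 \<le> m" "3 * m \<le> f" unfolding I_def by auto
    show "real (Nm f m) \<le> c"
    proof (cases "m = 1")
      case True then show ?thesis using Nm_one c0 by simp
    next
      case False
      then show ?thesis using Nm_small_bound[of m f] m unfolding c_def by simp
    qed
  qed
  also have "\<dots> = real (card I) * c" by simp
  also have "\<dots> \<le> real (f + 1) * c"
  proof (rule mult_right_mono[OF _ c0])
    have "card I \<le> card {1..Suc f}" unfolding I_def by (intro card_mono) auto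
    then show "real (card I) \<le> real (f + 1)" by simp
  qed
  also have "\<dots> = 50 * real (f + 1) ^ 4 * sqrt 2 ^ f * th ^ (f div 300)"
    unfolding c_def by (simp add: power_Suc[symmetric] mult_ac)
  finally show ?thesis .
qed

lemma th_div_le: "th ^ (x div 300) \<le> (64/63) * th powr (real x / 300)"
proof -
  have "th ^ (x div 300) = th powr real (x div 300)" by (simp add: powr_realpow)
  also have "\<dots> \<le> th powr (real x / 300 - 1)"
  proof (rule powr_mono')
    have "real x / 300 - 1 \<le> real (x div 300)"
    proof -
      have "x < 300 * (x div 300) + 300" by (metis add_less_cancel_left div_mult_mod_eq mod_less_divisor mult.commute zero_less_numeral)
      then have "real x < 300 * real (x div 300) + 300" by linarith
      then show ?thesis by simp
    qed
    then show "real (x div 300) \<ge> real x / 300 - 1" by simp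
  qed auto
  also have "\<dots> = (64/63) * th powr (real x / 300)" by (simp add: powr_diff)
  finally show ?thesis .
qed

lemma S_bound: "real (S d) \<le> 50 * real (3 * d + 3) ^ 3 * sqrt 2 ^ (3 * d + 2) * th ^ ((3 * d + 2) div 300)"
proof (cases "d = 0")
  case True then show ?thesis using S0 by simp
next
  case False
  have "real (S d) = real (Nm (3 * d + 2) (d + 1))" unfolding S_Nm ..
  also have "\<dots> \<le> 50 * real (3 * d + 2 + 1) ^ 3 * sqrt 2 ^ (3 * d + 2) * th ^ ((3 * d + 2) div 300)"
    by (rule Nm_small_bound) (use False in auto)
  finally show ?thesis by (simp add: algebra_simps)
qed

lemma sqrt2_pow: "sqrt 2 ^ k = 2 powr (real k / 2)"
proof -
  have "sqrt 2 = 2 powr (1/2)" by (simp add: powr_half_sqrt)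
  then have "sqrt 2 ^ k = (2 powr (1/2)) powr (real k)" by (simp add: powr_realpow)
  also have "\<dots> = 2 powr (real k / 2)" by (simp add: powr_powr)
  finally show ?thesis .
qed

definition bS :: "nat \<Rightarrow> real" where "bS d = 2 powr (- (3 * real d + 2) / 2) * real (S d)"

lemma bS_nonneg: "0 \<le> bS d" unfolding bS_def by simp

lemma bS_bound: "bS d \<le> 50 * (64/63) * real (3 * d + 3) ^ 3 * th powr (real d / 100)"
proof -
  have sq: "2 powr (- (3 * real d + 2) / 2) * sqrt 2 ^ (3 * d + 2) = 1"
  proof -
    have "sqrt 2 ^ (3 * d + 2) = 2 powr ((3 * real d + 2) / 2)"
      unfolding sqrt2_pow by (simp add: add.commute)
    then show ?thesis by (simp add: powr_add[symmetric] field_simps)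
  qed
  have "bS d \<le> 2 powr (- (3 * real d + 2) / 2) * (50 * real (3 * d + 3) ^ 3 * sqrt 2 ^ (3 * d + 2) * th ^ ((3 * d + 2) div 300))"
    unfolding bS_def by (rule mult_left_mono[OF S_bound]) simp
  also have "\<dots> = 50 * real (3 * d + 3) ^ 3 * th ^ ((3 * d + 2) div 300)"
    using sq by (simp add: mult_ac)
  also have "\<dots> \<le> 50 * real (3 * d + 3) ^ 3 * ((64/63) * th powr (real (3 * d + 2) / 300))"
    by (intro mult_left_mono th_div_le) auto
  also have "th powr (real (3 * d + 2) / 300) \<le> th powr (real d / 100)"
    by (rule powr_mono') auto
  then have "50 * real (3 * d + 3) ^ 3 * ((64/63) * th powr (real (3 * d + 2) / 300))
      \<le> 50 * real (3 * d + 3) ^ 3 * ((64/63) * th powr (real d / 100))"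
    by (intro mult_left_mono) auto
  finally show ?thesis by (simp add: mult_ac)
qed


lemma th_powr_pow: "(th powr (1/100)) ^ j = th powr (real j / 100)"
proof -
  have "(th powr (1/100)) ^ j = (th powr (1/100)) powr (real j)" by (simp add: powr_realpow)
  also have "\<dots> = th powr (real j / 100)" by (simp add: powr_powr)
  finally show ?thesis .
qed

lemma summable_bS_sub:
  assumes c: "c \<le> 1"
  shows "summable (\<lambda>j. bS (2 * j + c))"
proof (rule summable_comparison_test_ev)
  let ?r = "th powr (1/100)"
  let ?K = "50 * (64/63) :: real"
  show "summable (\<lambda>j. ?K * ?r ^ j)"
  proof (intro summable_mult summable_geometric)
    have "th powr (1/100) < 1 powr (1/100)" by (rule powr_less_mono2) auto
    then show "norm (th powr (1/100)) < 1" by simp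
  qed
  have lim: "(\<lambda>j. (6 * real j + 6) ^ 3 * th powr (real j / 100)) \<longlonglongrightarrow> 0" by real_asymp
  then have ev: "eventually (\<lambda>j. (6 * real j + 6) ^ 3 * th powr (real j / 100) < 1) sequentially"
    by (rule order_tendstoD) simp
  show "eventually (\<lambda>j. norm (bS (2 * j + c)) \<le> ?K * ?r ^ j) sequentially"
    using ev
  proof eventually_elim
    case (elim j)
    have "norm (bS (2 * j + c)) = bS (2 * j + c)" using bS_nonneg by simp
    also have "\<dots> \<le> ?K * real (3 * (2 * j + c) + 3) ^ 3 * th powr (real (2 * j + c) / 100)"
      by (rule bS_bound)
    also have "\<dots> \<le> ?K * (6 * real j + 6) ^ 3 * (th powr (real j / 100) * th powr (real j / 100))"
    proof (intro mult_mono mult_left_mono power_mono)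
      show "real (3 * (2 * j + c) + 3) \<le> 6 * real j + 6" using c by simp
      have "th powr (real (2 * j + c) / 100) \<le> th powr (real (2 * j) / 100)" by (rule powr_mono') auto
      also have "\<dots> = th powr (real j / 100) * th powr (real j / 100)" by (simp add: powr_add[symmetric])
      finally show "th powr (real (2 * j + c) / 100) \<le> th powr (real j / 100) * th powr (real j / 100)" .
    qed auto
    also have "\<dots> = ?K * ((6 * real j + 6) ^ 3 * th powr (real j / 100)) * th powr (real j / 100)"
      by (simp add: mult_ac)
    also have "\<dots> \<le> ?K * 1 * th powr (real j / 100)"
      using elim by (intro mult_right_mono mult_left_mono) auto
    also have "\<dots> = ?K * ?r ^ j" by (simp add: th_powr_pow)
    finally show ?case .
  qed
qed

lemma SA_rem_lim: "(\<lambda>n. real (SA n) / sqrt 2 ^ n) \<longlonglongrightarrow> 0"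
proof (rule tendsto_sandwich[of "\<lambda>_. 0" _ _ "\<lambda>n. 50 * (64/63) * (real n + 1) ^ 4 * th powr (real n / 300)"])
  show "eventually (\<lambda>n. 0 \<le> real (SA n) / sqrt 2 ^ n) sequentially" by simp
  show "eventually (\<lambda>n. real (SA n) / sqrt 2 ^ n \<le> 50 * (64/63) * (real n + 1) ^ 4 * th powr (real n / 300)) sequentially"
  proof (rule always_eventually, rule allI)
    fix n
    have p: "0 < sqrt 2 ^ n" by simp
    have "real (SA n) / sqrt 2 ^ n \<le> 50 * real (n + 1) ^ 4 * th ^ (n div 300)"
      using SA_bound[of n] p by (simp add: divide_le_eq mult_ac)
    also have "\<dots> \<le> 50 * real (n + 1) ^ 4 * ((64/63) * th powr (real n / 300))"
      by (intro mult_left_mono th_div_le) auto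
    finally show "real (SA n) / sqrt 2 ^ n \<le> 50 * (64/63) * (real n + 1) ^ 4 * th powr (real n / 300)"
      by (simp add: mult_ac add.commute)
  qed
  show "(\<lambda>n. 50 * (64/63) * (real n + 1) ^ 4 * th powr (real n / 300)) \<longlonglongrightarrow> 0" by real_asymp
qed simp


lemma powr2_half: "2 powr (real f / 2) = sqrt 2 ^ f" using sqrt2_pow by simp

lemma pow2_div_sqrt: "real ((2::nat) ^ a) / sqrt 2 ^ f = 2 powr (real a - real f / 2)"
proof -
  have "real ((2::nat) ^ a) = 2 powr real a" by (simp add: powr_realpow)
  moreover have "sqrt 2 ^ f = 2 powr (real f / 2)" by (rule sqrt2_pow)
  ultimately show ?thesis by (simp add: powr_diff)
qed

lemma F0_eq:
  assumes n1: "1 \<le> n"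
  shows "real (Fr (2 * n)) / sqrt 2 ^ (2 * n) = 1/2 + (\<Sum>j<(n + 2) div 3. bS (2 * j)) + real (SA (2 * n)) / sqrt 2 ^ (2 * n)"
proof -
  have "real (Fr (2 * n)) / sqrt 2 ^ (2 * n) = real (2 ^ (n - 1)) / sqrt 2 ^ (2 * n)
      + (\<Sum>j<(n + 2) div 3. real (S (2 * j)) * (real (2 ^ (n - 3 * j - 1)) / sqrt 2 ^ (2 * n)))
      + real (SA (2 * n)) / sqrt 2 ^ (2 * n)"
    unfolding Fr_even[OF n1] by (simp add: add_divide_distrib sum_divide_distrib)
  also have "real ((2::nat) ^ (n - 1)) / sqrt 2 ^ (2 * n) = 1/2"
  proof -
    have "real ((2::nat) ^ (n - 1)) / sqrt 2 ^ (2 * n) = 2 powr (real (n - 1) - real (2 * n) / 2)"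
      by (rule pow2_div_sqrt)
    also have "real (n - 1) - real (2 * n) / 2 = -1" using n1 by (simp add: of_nat_diff)
    finally show ?thesis by (simp add: powr_minus)
  qed
  also have "(\<Sum>j<(n + 2) div 3. real (S (2 * j)) * (real ((2::nat) ^ (n - 3 * j - 1)) / sqrt 2 ^ (2 * n)))
      = (\<Sum>j<(n + 2) div 3. bS (2 * j))"
  proof (rule sum.cong[OF refl])
    fix j assume "j \<in> {..<(n + 2) div 3}"
    moreover have "3 * ((n + 2) div 3) \<le> n + 2" by (rule times_div_less_eq_dividend)
    ultimately have j: "3 * j + 1 \<le> n" by auto
    have "real ((2::nat) ^ (n - 3 * j - 1)) / sqrt 2 ^ (2 * n) = 2 powr (real (n - 3 * j - 1) - real (2 * n) / 2)"
      by (rule pow2_div_sqrt)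
    also have "real (n - 3 * j - 1) - real (2 * n) / 2 = - (3 * real (2 * j) + 2) / 2" using j by (simp add: of_nat_diff)
    finally show "real (S (2 * j)) * (real ((2::nat) ^ (n - 3 * j - 1)) / sqrt 2 ^ (2 * n)) = bS (2 * j)"
      unfolding bS_def by simp
  qed
  finally show ?thesis .
qed

lemma F1_eq:
  assumes n1: "1 \<le> n"
  shows "real (Fr (2 * n + 1)) / sqrt 2 ^ (2 * n + 1) = 1 / sqrt 2 + (\<Sum>j<(n + 1) div 3. bS (2 * j + 1))
     + real (SA (2 * n + 1)) / sqrt 2 ^ (2 * n + 1)"
proof -
  have "real (Fr (2 * n + 1)) / sqrt 2 ^ (2 * n + 1) = real (2 ^ n) / sqrt 2 ^ (2 * n + 1)
      + (\<Sum>j<(n + 1) div 3. real (S (2 * j + 1)) * (real (2 ^ (n - 3 * j - 2)) / sqrt 2 ^ (2 * n + 1)))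
      + real (SA (2 * n + 1)) / sqrt 2 ^ (2 * n + 1)"
    unfolding Fr_odd[OF n1] by (simp add: add_divide_distrib sum_divide_distrib)
  also have "real ((2::nat) ^ n) / sqrt 2 ^ (2 * n + 1) = 1 / sqrt 2"
  proof -
    have "real ((2::nat) ^ n) / sqrt 2 ^ (2 * n + 1) = 2 powr (real n - real (2 * n + 1) / 2)"
      by (rule pow2_div_sqrt)
    also have "real n - real (2 * n + 1) / 2 = - (1/2)" by (simp add: field_simps)
    also have "(2::real) powr (- (1/2)) = inverse (2 powr (1/2))" by (rule powr_minus)
    also have "(2::real) powr (1/2) = sqrt 2" by (rule powr_half_sqrt) simp
    finally show ?thesis by (simp only: inverse_eq_divide)
  qed
  also have "(\<Sum>j<(n + 1) div 3. real (S (2 * j + 1)) * (real ((2::nat) ^ (n - 3 * j - 2)) / sqrt 2 ^ (2 * n + 1)))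
      = (\<Sum>j<(n + 1) div 3. bS (2 * j + 1))"
  proof (rule sum.cong[OF refl])
    fix j assume "j \<in> {..<(n + 1) div 3}"
    moreover have "3 * ((n + 1) div 3) \<le> n + 1" by (rule times_div_less_eq_dividend)
    ultimately have j: "3 * j + 2 \<le> n" by auto
    have "real ((2::nat) ^ (n - 3 * j - 2)) / sqrt 2 ^ (2 * n + 1) = 2 powr (real (n - 3 * j - 2) - real (2 * n + 1) / 2)"
      by (rule pow2_div_sqrt)
    also have "real (n - 3 * j - 2) - real (2 * n + 1) / 2 = - (3 * real (2 * j + 1) + 2) / 2" using j by (simp add: of_nat_diff field_simps)
    finally show "real (S (2 * j + 1)) * (real ((2::nat) ^ (n - 3 * j - 2)) / sqrt 2 ^ (2 * n + 1)) = bS (2 * j + 1)"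
      unfolding bS_def by simp
  qed
  finally show ?thesis .
qed

lemma filterlim_div3: "filterlim (\<lambda>n::nat. (n + c) div 3) at_top sequentially"
  unfolding filterlim_at_top eventually_sequentially
proof
  fix Z :: nat
  show "\<exists>N. \<forall>n\<ge>N. Z \<le> (n + c) div 3"
    by (rule exI[of _ "3 * Z"]) (auto simp: le_div_geq less_eq_div_iff_mult_less_eq)
qed

definition L0 :: real where "L0 = 1/2 + (\<Sum>j. bS (2 * j))"
definition L1 :: real where "L1 = 1 / sqrt 2 + (\<Sum>j. bS (2 * j + 1))"

lemma L0_pos: "1/2 \<le> L0"
  unfolding L0_def using suminf_nonneg[OF summable_bS_sub[of 0]] bS_nonneg by simp
lemma L1_pos: "1 / sqrt 2 \<le> L1"
  unfolding L1_def using suminf_nonneg[OF summable_bS_sub[of 1]] bS_nonneg by simp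

lemma lim_F0: "(\<lambda>n. real (Fr (2 * n)) / sqrt 2 ^ (2 * n)) \<longlonglongrightarrow> L0"
proof -
  have ps: "(\<lambda>n. \<Sum>j<(n + 2) div 3. bS (2 * j)) \<longlonglongrightarrow> (\<Sum>j. bS (2 * j))"
    using filterlim_compose[OF summable_LIMSEQ[OF summable_bS_sub[of 0, simplified]] filterlim_div3[of 2]] by simp
  have rem: "(\<lambda>n. real (SA (2 * n)) / sqrt 2 ^ (2 * n)) \<longlonglongrightarrow> 0"
    using LIMSEQ_subseq_LIMSEQ[OF SA_rem_lim, of "\<lambda>n. 2 * n"] by (simp add: strict_mono_def comp_def)
  have "(\<lambda>n. 1/2 + (\<Sum>j<(n + 2) div 3. bS (2 * j)) + real (SA (2 * n)) / sqrt 2 ^ (2 * n)) \<longlonglongrightarrow> 1/2 + (\<Sum>j. bS (2 * j)) + 0"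
    by (intro tendsto_add tendsto_const ps rem)
  then have "(\<lambda>n. 1/2 + (\<Sum>j<(n + 2) div 3. bS (2 * j)) + real (SA (2 * n)) / sqrt 2 ^ (2 * n)) \<longlonglongrightarrow> L0"
    unfolding L0_def by simp
  moreover have "eventually (\<lambda>n. 1/2 + (\<Sum>j<(n + 2) div 3. bS (2 * j)) + real (SA (2 * n)) / sqrt 2 ^ (2 * n)
      = real (Fr (2 * n)) / sqrt 2 ^ (2 * n)) sequentially"
    unfolding eventually_sequentially by (intro exI[of _ 1] allI impI) (rule F0_eq[symmetric])
  ultimately show ?thesis by (rule Lim_transform_eventually)
qed

lemma lim_F1: "(\<lambda>n. real (Fr (2 * n + 1)) / sqrt 2 ^ (2 * n + 1)) \<longlonglongrightarrow> L1"
proof -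
  have ps: "(\<lambda>n. \<Sum>j<(n + 1) div 3. bS (2 * j + 1)) \<longlonglongrightarrow> (\<Sum>j. bS (2 * j + 1))"
    using filterlim_compose[OF summable_LIMSEQ[OF summable_bS_sub[of 1, simplified]] filterlim_div3[of 1]] by simp
  have rem: "(\<lambda>n. real (SA (2 * n + 1)) / sqrt 2 ^ (2 * n + 1)) \<longlonglongrightarrow> 0"
    using LIMSEQ_subseq_LIMSEQ[OF SA_rem_lim, of "\<lambda>n. 2 * n + 1"] by (simp add: strict_mono_def comp_def)
  have "(\<lambda>n. 1 / sqrt 2 + (\<Sum>j<(n + 1) div 3. bS (2 * j + 1)) + real (SA (2 * n + 1)) / sqrt 2 ^ (2 * n + 1))
      \<longlonglongrightarrow> 1 / sqrt 2 + (\<Sum>j. bS (2 * j + 1)) + 0"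
    by (intro tendsto_add tendsto_const ps rem)
  then have "(\<lambda>n. 1 / sqrt 2 + (\<Sum>j<(n + 1) div 3. bS (2 * j + 1)) + real (SA (2 * n + 1)) / sqrt 2 ^ (2 * n + 1)) \<longlonglongrightarrow> L1"
    unfolding L1_def by simp
  moreover have "eventually (\<lambda>n. 1 / sqrt 2 + (\<Sum>j<(n + 1) div 3. bS (2 * j + 1)) + real (SA (2 * n + 1)) / sqrt 2 ^ (2 * n + 1)
      = real (Fr (2 * n + 1)) / sqrt 2 ^ (2 * n + 1)) sequentially"
    unfolding eventually_sequentially by (intro exI[of _ 1] allI impI) (rule F1_eq[symmetric])
  ultimately show ?thesis by (rule Lim_transform_eventually)
qed

lemma C0_eq: "C0 = L0"
proof -
  have "(\<lambda>n. real (Fr (2 * n)) / 2 powr (real (2 * n) / 2)) = (\<lambda>n. real (Fr (2 * n)) / sqrt 2 ^ (2 * n))"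
    by (simp only: powr2_half)
  then show ?thesis unfolding C0_def using limI[OF lim_F0] by simp
qed

lemma C1_eq: "C1 = L1"
proof -
  have "(\<lambda>n. real (Fr (2 * n + 1)) / 2 powr (real (2 * n + 1) / 2)) = (\<lambda>n. real (Fr (2 * n + 1)) / sqrt 2 ^ (2 * n + 1))"
    by (simp only: powr2_half)
  then show ?thesis unfolding C1_def using limI[OF lim_F1] by simp
qed

lemma prob_diff_Nm:
  assumes "int f - d = 2 * int m"
  shows "prob_diff f d = (real (Nm f m) / sqrt 2 ^ f) / (real (Fr f) / sqrt 2 ^ f)"
proof -
  have "{L. numerical_semigroup L \<and> frobenius L = int f \<and> int f - 2 * int (multiplicity L) = d}
      = {L \<in> Sg f. multiplicity L = m}"
  proof -
    have "int f - 2 * int (multiplicity L) = d \<longleftrightarrow> multiplicity L = m" for L using assms by auto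
    then show ?thesis using Sg_iff[of f] by auto
  qed
  then have "prob_diff f d = real (Nm f m) / real (Fr f)" unfolding prob_diff_def Nm_def by simp
  also have "\<dots> = (real (Nm f m) / sqrt 2 ^ f) / (real (Fr f) / sqrt 2 ^ f)" by simp
  finally show ?thesis .
qed

lemma lim_helper:
  fixes F X :: "nat \<Rightarrow> real" and c L :: real
  assumes "F \<longlonglongrightarrow> L" "L \<noteq> 0" "eventually (\<lambda>n. X n = c / F n) sequentially"
  shows "X \<longlonglongrightarrow> c / L"
proof -
  have "(\<lambda>n. c / F n) \<longlonglongrightarrow> c / L" by (intro tendsto_divide tendsto_const assms(1,2))
  moreover have "eventually (\<lambda>n. c / F n = X n) sequentially" using assms(3) by (simp add: eq_commute)
  ultimately show ?thesis by (rule Lim_transform_eventually)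
qed

lemma L0_ne: "L0 \<noteq> 0" using L0_pos by linarith
lemma L1_ne: "L1 \<noteq> 0"
proof -
  have "0 < 1 / sqrt (2::real)" by simp
  then show ?thesis using L1_pos by linarith
qed

lemma even_part:
  fixes k :: int
  shows "(\<lambda>n. prob_diff (2 * n) (2 * k)) \<longlonglongrightarrow>
           (if k < 0 then 2 powr (real_of_int k - 1) / C0
            else if k = 0 then 0
            else 2 powr (- 3 * real_of_int k - 1) * real (S (nat (2 * k))) / C0)"
proof -
  let ?F = "\<lambda>n. real (Fr (2 * n)) / sqrt 2 ^ (2 * n)"
  consider "k < 0" | "k = 0" | "0 < k" by linarith
  then show ?thesis
  proof cases
    case 1
    define K where "K = nat (- k)"
    have K1: "1 \<le> K" and kK: "k = - int K" unfolding K_def using 1 by auto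
    have "(\<lambda>n. prob_diff (2 * n) (2 * k)) \<longlonglongrightarrow> 2 powr (real_of_int k - 1) / L0"
    proof (rule lim_helper[OF lim_F0 L0_ne])
      show "eventually (\<lambda>n. prob_diff (2 * n) (2 * k) = 2 powr (real_of_int k - 1) / ?F n) sequentially"
        unfolding eventually_sequentially
      proof (intro exI[of _ "K + 1"] allI impI)
        fix n assume n: "K + 1 \<le> n"
        have "prob_diff (2 * n) (2 * k) = (real (Nm (2 * n) (n + K)) / sqrt 2 ^ (2 * n)) / ?F n"
          by (rule prob_diff_Nm) (simp add: kK)
        also have "Nm (2 * n) (n + K) = 2 ^ (2 * n - 1 - (n + K))" by (rule Nm_big) (use n K1 in auto)
        also have "real ((2::nat) ^ (2 * n - 1 - (n + K))) / sqrt 2 ^ (2 * n) = 2 powr (real (2 * n - 1 - (n + K)) - real (2 * n) / 2)"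
          by (rule pow2_div_sqrt)
        also have "real (2 * n - 1 - (n + K)) - real (2 * n) / 2 = real_of_int k - 1" using n by (simp add: kK of_nat_diff)
        finally show "prob_diff (2 * n) (2 * k) = 2 powr (real_of_int k - 1) / ?F n" .
      qed
    qed
    then show ?thesis using 1 C0_eq by simp
  next
    case 2
    have "prob_diff (2 * n) (2 * k) = 0" for n
    proof -
      have "prob_diff (2 * n) (2 * k) = (real (Nm (2 * n) n) / sqrt 2 ^ (2 * n)) / ?F n"
        by (rule prob_diff_Nm) (simp add: 2)
      then show ?thesis using Nm_half by simp
    qed
    then show ?thesis using 2 by simp
  next
    case 3
    define K where "K = nat k"
    have kK: "k = int K" unfolding K_def using 3 by auto
    have "(\<lambda>n. prob_diff (2 * n) (2 * k)) \<longlonglongrightarrow> (2 powr (- 3 * real_of_int k - 1) * real (S (nat (2 * k)))) / L0"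
    proof (rule lim_helper[OF lim_F0 L0_ne])
      show "eventually (\<lambda>n. prob_diff (2 * n) (2 * k) = (2 powr (- 3 * real_of_int k - 1) * real (S (nat (2 * k)))) / ?F n) sequentially"
        unfolding eventually_sequentially
      proof (intro exI[of _ "3 * K + 1"] allI impI)
        fix n assume n: "3 * K + 1 \<le> n"
        have "prob_diff (2 * n) (2 * k) = (real (Nm (2 * n) (n - K)) / sqrt 2 ^ (2 * n)) / ?F n"
          by (rule prob_diff_Nm) (use n in \<open>simp add: kK of_nat_diff\<close>)
        also have "Nm (2 * n) (n - K) = S (2 * K) * 2 ^ (n - 3 * K - 1)" by (rule Nm_even_mid) (use n in auto)
        also have "real (S (2 * K) * 2 ^ (n - 3 * K - 1)) / sqrt 2 ^ (2 * n)
            = real (S (2 * K)) * (real ((2::nat) ^ (n - 3 * K - 1)) / sqrt 2 ^ (2 * n))" by simp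
        also have "real ((2::nat) ^ (n - 3 * K - 1)) / sqrt 2 ^ (2 * n) = 2 powr (real (n - 3 * K - 1) - real (2 * n) / 2)"
          by (rule pow2_div_sqrt)
        also have "real (n - 3 * K - 1) - real (2 * n) / 2 = - 3 * real_of_int k - 1" using n by (simp add: kK of_nat_diff)
        also have "S (2 * K) = S (nat (2 * k))" by (simp add: kK nat_mult_distrib)
        finally show "prob_diff (2 * n) (2 * k) = (2 powr (- 3 * real_of_int k - 1) * real (S (nat (2 * k)))) / ?F n"
          by (simp add: mult.commute)
      qed
    qed
    then show ?thesis using 3 C0_eq by simp
  qed
qed

lemma odd_part:
  fixes k :: int
  shows "(\<lambda>n. prob_diff (2 * n + 1) (2 * k + 1)) \<longlonglongrightarrow>
           (if k < 0 then 2 powr ((2 * real_of_int k - 1) / 2) / C1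
            else 2 powr (- (6 * real_of_int k + 5) / 2) * real (S (nat (2 * k + 1))) / C1)"
proof -
  let ?F = "\<lambda>n. real (Fr (2 * n + 1)) / sqrt 2 ^ (2 * n + 1)"
  consider "k < 0" | "0 \<le> k" by linarith
  then show ?thesis
  proof cases
    case 1
    define K where "K = nat (- k)"
    have K1: "1 \<le> K" and kK: "k = - int K" unfolding K_def using 1 by auto
    have "(\<lambda>n. prob_diff (2 * n + 1) (2 * k + 1)) \<longlonglongrightarrow> 2 powr ((2 * real_of_int k - 1) / 2) / L1"
    proof (rule lim_helper[OF lim_F1 L1_ne])
      show "eventually (\<lambda>n. prob_diff (2 * n + 1) (2 * k + 1) = 2 powr ((2 * real_of_int k - 1) / 2) / ?F n) sequentially"
        unfolding eventually_sequentially
      proof (intro exI[of _ "K + 1"] allI impI)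
        fix n assume n: "K + 1 \<le> n"
        have "prob_diff (2 * n + 1) (2 * k + 1) = (real (Nm (2 * n + 1) (n + K)) / sqrt 2 ^ (2 * n + 1)) / ?F n"
          by (rule prob_diff_Nm) (simp add: kK)
        also have "Nm (2 * n + 1) (n + K) = 2 ^ (2 * n + 1 - 1 - (n + K))" by (rule Nm_big) (use n K1 in auto)
        also have "real ((2::nat) ^ (2 * n + 1 - 1 - (n + K))) / sqrt 2 ^ (2 * n + 1)
            = 2 powr (real (2 * n + 1 - 1 - (n + K)) - real (2 * n + 1) / 2)"
          by (rule pow2_div_sqrt)
        also have "real (2 * n + 1 - 1 - (n + K)) - real (2 * n + 1) / 2 = (2 * real_of_int k - 1) / 2"
          using n by (simp add: kK of_nat_diff field_simps)
        finally show "prob_diff (2 * n + 1) (2 * k + 1) = 2 powr ((2 * real_of_int k - 1) / 2) / ?F n" .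
      qed
    qed
    then show ?thesis using 1 C1_eq by simp
  next
    case 2
    define K where "K = nat k"
    have kK: "k = int K" unfolding K_def using 2 by auto
    have "(\<lambda>n. prob_diff (2 * n + 1) (2 * k + 1)) \<longlonglongrightarrow> (2 powr (- (6 * real_of_int k + 5) / 2) * real (S (nat (2 * k + 1)))) / L1"
    proof (rule lim_helper[OF lim_F1 L1_ne])
      show "eventually (\<lambda>n. prob_diff (2 * n + 1) (2 * k + 1) = (2 powr (- (6 * real_of_int k + 5) / 2) * real (S (nat (2 * k + 1)))) / ?F n) sequentially"
        unfolding eventually_sequentially
      proof (intro exI[of _ "3 * K + 2"] allI impI)
        fix n assume n: "3 * K + 2 \<le> n"
        have "prob_diff (2 * n + 1) (2 * k + 1) = (real (Nm (2 * n + 1) (n - K)) / sqrt 2 ^ (2 * n + 1)) / ?F n"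
          by (rule prob_diff_Nm) (use n in \<open>simp add: kK of_nat_diff\<close>)
        also have "Nm (2 * n + 1) (n - K) = S (2 * K + 1) * 2 ^ (n - 3 * K - 2)" by (rule Nm_odd_mid) (use n in auto)
        also have "real (S (2 * K + 1) * 2 ^ (n - 3 * K - 2)) / sqrt 2 ^ (2 * n + 1)
            = real (S (2 * K + 1)) * (real ((2::nat) ^ (n - 3 * K - 2)) / sqrt 2 ^ (2 * n + 1))" by simp
        also have "real ((2::nat) ^ (n - 3 * K - 2)) / sqrt 2 ^ (2 * n + 1) = 2 powr (real (n - 3 * K - 2) - real (2 * n + 1) / 2)"
          by (rule pow2_div_sqrt)
        also have "real (n - 3 * K - 2) - real (2 * n + 1) / 2 = - (6 * real_of_int k + 5) / 2"
          using n by (simp add: kK of_nat_diff field_simps)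
        also have "S (2 * K + 1) = S (nat (2 * k + 1))" by (simp add: kK nat_mult_distrib nat_add_distrib)
        finally show "prob_diff (2 * n + 1) (2 * k + 1) = (2 powr (- (6 * real_of_int k + 5) / 2) * real (S (nat (2 * k + 1)))) / ?F n"
          by (simp add: mult.commute)
      qed
    qed
    then show ?thesis using 2 C1_eq by simp
  qed
qed

theorem theorem5p1:
  fixes k :: int
  shows "((\<lambda>n. prob_diff (2 * n) (2 * k)) \<longlonglongrightarrow>
           (if k < 0 then 2 powr (real_of_int k - 1) / C0
            else if k = 0 then 0
            else 2 powr (- 3 * real_of_int k - 1) * real (S (nat (2 * k))) / C0)) \<and>
         ((\<lambda>n. prob_diff (2 * n + 1) (2 * k + 1)) \<longlonglongrightarrow>
           (if k < 0 then 2 powr ((2 * real_of_int k - 1) / 2) / C1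
            else 2 powr (- (6 * real_of_int k + 5) / 2) * real (S (nat (2 * k + 1))) / C1))"
  using even_part odd_part by blast

end
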